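(* Assume the wavelets are compactly supported. Let $s\ge0$, $p\in[1,+\infty)$, let $d'\in(0,d)$ and let $(K,t,N,a,(\Theta_n),\mu)$ be adapted Cantor data of dimension at least $d'$. For every $\alpha\in(\max(0,d-sp),d')$ and every $G\subset K$ with $\overline{\dim}_B(G)<\alpha$, there exists $f\in B^{s,1}_p(\mathbb R^d)$ with $\|f\|\le1$ such that: (1) for all $x\in K$, $(P_jf(x))_j$ converges; (2) for all $x\in K$ and all $j\in\mathbb N$, $R_jf(x)\ge0$; (3) for all $x\in G$, $\liminf_j\frac{\log|R_jf(x)|}{j\log2}\ge\frac{d-sp-\alpha}p$.
   Context: Standing setup. $(V_j)_{j\in\mathbb Z}$ is an orthogonal multiresolution analysis of $L^2(\mathbb R^d)$ with scaling function $\varphi$, and $\psi^{(1)},\dots,\psi^{(2^d-1)}$ associated wavelets (the functions $2^{dj/2}\psi^{(i)}(2^j\cdot-k)$ form an orthonormal basis of $L^2(\mathbb R^d)$), smooth (at least $\lfloor s\rfloor+1$ derivatives). For $j\ge0$, $k\in\mathbb Z^d$, the dyadic cube $(j,k)=\prod_m[k_m2^{-j},(k_m+1)2^{-j})$, $\Lambda_j$ the set of such cubes, $\psi^{(i)}_{(j,k)}(x)=\psi^{(i)}(2^jx-k)$; for a closed dyadic cube $\mu=\prod_m[k_m2^{-j},(k_m+1)2^{-j}]$ write $\psi^{(1)}_\mu=\psi^{(1)}(2^j\cdot-k)$. For $f$: $C_k=\int\overline{\varphi(x-k)}f$, $c^{(i)}_\lambda=2^{dj}\int\overline{\psi^{(i)}_\lambda}f$,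 $Q_lf=\sum_i\sum_{\lambda\in\Lambda_l}c^{(i)}_\lambda\psi^{(i)}_\lambda$, $P_jf=\sum_kC_k\varphi(\cdot-k)+\sum_{0\le l<j}Q_lf$, and when $(P_jf(x))_j$ converges, $R_jf(x)=\sum_{l\ge j}Q_lf(x)$. $B^{s,q}_p(\mathbb R^d)$: $f$ with $(C_k)\in\ell^p$ and $(\varepsilon_j)\in\ell^q$, $\varepsilon_j=2^{(s-d/p)j}(\sum_i\sum_{\lambda\in\Lambda_j}|c^{(i)}_\lambda|^p)^{1/p}$, norm $\|(C_k)\|_{\ell^p}+\|(\varepsilon_j)\|_{\ell^q}$. $\overline{\dim}_B$ is upper box dimension; $\log0=-\infty$. Adapted Cantor data of dimension at least $d'$: a compact self-similar set $K\subset\mathbb R^d$ satisfying the open set condition with $\dim_{\mathcal H}K=\dim_{\mathcal P}K\ge d'$, integers $t,N\ge1$, a nonzero real $a$, finite families $\Theta_n$ ($n\ge0$) of closed dyadic cubes of side $2^{-(t+Nn)}$ and injective maps $\mu$ from $\Theta_n$ to closed dyadic cubes of side $2^{-Nn}$, such that $K_n=\bigcup_{\lambda\in\Theta_n}\lambda$ is decreasing, $K=\bigcap_nK_n$, and for all $n$, $x\in K_n$, $\lambda\in\Theta_n$: $a\psi^{(1)}_{\mu(\lambda)}(x)\ge1$ if $x\in\lambda$ and $\psi^{(1)}_{\mu(\lambda)}(x)=0$ otherwise. *)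

theory Defs
  imports "HOL-Analysis.Analysis"
begin

definition vec_of_int :: "int^'n \<Rightarrow> real^'n" where
  "vec_of_int k = (\<chi> m. real_of_int (k$m))"

definition dil :: "(real^'n \<Rightarrow> real) \<Rightarrow> int \<Rightarrow> int^'n \<Rightarrow> real^'n \<Rightarrow> real" where
  "dil g j k x = g ((2 powr real_of_int j) *\<^sub>R x - vec_of_int k)"

definition sq_int :: "(real^'n \<Rightarrow> real) \<Rightarrow> bool" where
  "sq_int f \<longleftrightarrow> f \<in> borel_measurable lebesgue \<and> integrable lebesgue (\<lambda>x. (f x)\<^sup>2)"

definition Lp_fun :: "real \<Rightarrow> (real^'n \<Rightarrow> real) \<Rightarrow> bool" where
  "Lp_fun p f \<longleftrightarrow> f \<in> borel_measurable lebesgue \<and> integrable lebesgue (\<lambda>x. \<bar>f x\<bar> powr p)"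

definition in_closed_span :: "(real^'n \<Rightarrow> real) set \<Rightarrow> (real^'n \<Rightarrow> real) \<Rightarrow> bool" where
  "in_closed_span S f \<longleftrightarrow> sq_int f \<and>
     (\<forall>\<epsilon>>0. \<exists>F c. finite F \<and> F \<subseteq> S \<and>
        (\<integral>x. (f x - (\<Sum>g\<in>F. c g * g x))\<^sup>2 \<partial>lebesgue) < \<epsilon>)"

definition orthonormal_on :: "'i set \<Rightarrow> ('i \<Rightarrow> real^'n \<Rightarrow> real) \<Rightarrow> bool" where
  "orthonormal_on I e \<longleftrightarrow> (\<forall>i\<in>I. sq_int (e i)) \<and>
     (\<forall>i\<in>I. \<forall>j\<in>I. (\<integral>x. e i x * e j x \<partial>lebesgue) = (if i = j then 1 else 0))"

definition onb_L2 :: "'i set \<Rightarrow> ('i \<Rightarrow> real^'n \<Rightarrow> real) \<Rightarrow> bool" where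
  "onb_L2 I e \<longleftrightarrow> orthonormal_on I e \<and>
     (\<forall>f. sq_int f \<and> (\<forall>i\<in>I. (\<integral>x. f x * e i x \<partial>lebesgue) = 0) \<longrightarrow>
          (AE x in lebesgue. f x = 0))"

definition MRA_space :: "(real^'n \<Rightarrow> real) \<Rightarrow> int \<Rightarrow> (real^'n \<Rightarrow> real) set" where
  "MRA_space \<phi> j = {f. in_closed_span (range (\<lambda>k. dil \<phi> j k)) f}"

definition orthogonal_MRA :: "(real^'n \<Rightarrow> real) \<Rightarrow> bool" where
  "orthogonal_MRA \<phi> \<longleftrightarrow>
     orthonormal_on UNIV (\<lambda>k. dil \<phi> 0 k) \<and>
     (\<forall>j. MRA_space \<phi> j \<subseteq> MRA_space \<phi> (j + 1)) \<and>
     (\<forall>f. (\<forall>j. f \<in> MRA_space \<phi> j) \<longrightarrow> (AE x in lebesgue. f x = 0)) \<and>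
     (\<forall>f. sq_int f \<longrightarrow> (\<forall>\<epsilon>>0. \<exists>j g. g \<in> MRA_space \<phi> j \<and>
          (\<integral>x. (f x - g x)\<^sup>2 \<partial>lebesgue) < \<epsilon>))"

definition wav_idx :: "'n::finite itself \<Rightarrow> nat set" where
  "wav_idx _ = {1..2 ^ CARD('n) - 1}"

definition associated_wavelets :: "(real^'n \<Rightarrow> real) \<Rightarrow> (nat \<Rightarrow> real^'n \<Rightarrow> real) \<Rightarrow> bool" where
  "associated_wavelets \<phi> \<psi> \<longleftrightarrow>
     (\<forall>i\<in>wav_idx TYPE('n). \<psi> i \<in> MRA_space \<phi> 1 \<and>
        (\<forall>g\<in>MRA_space \<phi> 0. (\<integral>x. \<psi> i x * g x \<partial>lebesgue) = 0)) \<and>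
     onb_L2 (wav_idx TYPE('n) \<times> (UNIV :: int set) \<times> (UNIV :: (int^'n) set))
        (\<lambda>(i, j, k) x. 2 powr (real CARD('n) * real_of_int j / 2) * dil (\<psi> i) j k x)"

fun Ck :: "nat \<Rightarrow> (real^'n \<Rightarrow> real) \<Rightarrow> bool" where
  "Ck 0 f = continuous_on UNIV f"
| "Ck (Suc r) f = (f differentiable_on UNIV \<and>
      (\<forall>m. Ck r (\<lambda>x. frechet_derivative f (at x) (axis m 1))))"

definition compactly_supported :: "(real^'n \<Rightarrow> real) \<Rightarrow> bool" where
  "compactly_supported g \<longleftrightarrow> (\<exists>R. \<forall>x. norm x > R \<longrightarrow> g x = 0)"

definition wavelet_setup :: "real \<Rightarrow> (real^'n \<Rightarrow> real) \<Rightarrow> (nat \<Rightarrow> real^'n \<Rightarrow> real) \<Rightarrow> bool" where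
  "wavelet_setup s \<phi> \<psi> \<longleftrightarrow> orthogonal_MRA \<phi> \<and> associated_wavelets \<phi> \<psi> \<and>
     Ck (nat \<lfloor>s\<rfloor> + 1) \<phi> \<and> (\<forall>i\<in>wav_idx TYPE('n). Ck (nat \<lfloor>s\<rfloor> + 1) (\<psi> i))"

definition scoef :: "(real^'n \<Rightarrow> real) \<Rightarrow> (real^'n \<Rightarrow> real) \<Rightarrow> int^'n \<Rightarrow> real" where
  "scoef \<phi> f k = (\<integral>x. \<phi> (x - vec_of_int k) * f x \<partial>lebesgue)"

definition wcoef :: "(nat \<Rightarrow> real^'n \<Rightarrow> real) \<Rightarrow> (real^'n \<Rightarrow> real) \<Rightarrow> nat \<Rightarrow> nat \<Rightarrow> int^'n \<Rightarrow> real" where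
  "wcoef \<psi> f i j k = 2 powr (real CARD('n) * real j) *
      (\<integral>x. dil (\<psi> i) (int j) k x * f x \<partial>lebesgue)"

definition Qop :: "(nat \<Rightarrow> real^'n \<Rightarrow> real) \<Rightarrow> (real^'n \<Rightarrow> real) \<Rightarrow> nat \<Rightarrow> real^'n \<Rightarrow> real" where
  "Qop \<psi> f l x = (\<Sum>i\<in>wav_idx TYPE('n). \<Sum>\<^sub>\<infinity>k. wcoef \<psi> f i l k * dil (\<psi> i) (int l) k x)"

definition Pop :: "(real^'n \<Rightarrow> real) \<Rightarrow> (nat \<Rightarrow> real^'n \<Rightarrow> real) \<Rightarrow> (real^'n \<Rightarrow> real) \<Rightarrow> nat \<Rightarrow> real^'n \<Rightarrow> real" where
  "Pop \<phi> \<psi> f j x = (\<Sum>\<^sub>\<infinity>k. scoef \<phi> f k * \<phi> (x - vec_of_int k)) + (\<Sum>l<j. Qop \<psi> f l x)"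

definition Rop :: "(nat \<Rightarrow> real^'n \<Rightarrow> real) \<Rightarrow> (real^'n \<Rightarrow> real) \<Rightarrow> nat \<Rightarrow> real^'n \<Rightarrow> real" where
  "Rop \<psi> f j x = (\<Sum>l. Qop \<psi> f (l + j) x)"

definition besov_eps :: "(nat \<Rightarrow> real^'n \<Rightarrow> real) \<Rightarrow> real \<Rightarrow> real \<Rightarrow> (real^'n \<Rightarrow> real) \<Rightarrow> nat \<Rightarrow> real" where
  "besov_eps \<psi> s p f j = 2 powr ((s - real CARD('n) / p) * real j) *
     (\<Sum>i\<in>wav_idx TYPE('n). \<Sum>\<^sub>\<infinity>k. \<bar>wcoef \<psi> f i j k\<bar> powr p) powr (1 / p)"

text \<open>f in B^{s,q}_p (here f is taken in L^p, so that the coefficients are defined).\<close>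
definition besov :: "(real^'n \<Rightarrow> real) \<Rightarrow> (nat \<Rightarrow> real^'n \<Rightarrow> real) \<Rightarrow> real \<Rightarrow> real \<Rightarrow> real \<Rightarrow> (real^'n \<Rightarrow> real) \<Rightarrow> bool" where
  "besov \<phi> \<psi> s p q f \<longleftrightarrow> Lp_fun p f \<and>
     (\<lambda>k. \<bar>scoef \<phi> f k\<bar> powr p) summable_on UNIV \<and>
     (\<forall>i\<in>wav_idx TYPE('n). \<forall>j. (\<lambda>k. \<bar>wcoef \<psi> f i j k\<bar> powr p) summable_on UNIV) \<and>
     summable (\<lambda>j. besov_eps \<psi> s p f j powr q)"

definition besov_norm :: "(real^'n \<Rightarrow> real) \<Rightarrow> (nat \<Rightarrow> real^'n \<Rightarrow> real) \<Rightarrow> real \<Rightarrow> real \<Rightarrow> real \<Rightarrow> (real^'n \<Rightarrow> real) \<Rightarrow> real" where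
  "besov_norm \<phi> \<psi> s p q f =
     (\<Sum>\<^sub>\<infinity>k. \<bar>scoef \<phi> f k\<bar> powr p) powr (1 / p) +
     (\<Sum>j. besov_eps \<psi> s p f j powr q) powr (1 / q)"

definition cover_number :: "real \<Rightarrow> 'a::metric_space set \<Rightarrow> nat" where
  "cover_number \<delta> E = Inf {card C | C. finite C \<and> E \<subseteq> \<Union>C \<and>
       (\<forall>A\<in>C. bounded A \<and> diameter A \<le> \<delta>)}"

definition upper_box_dim :: "'a::metric_space set \<Rightarrow> ereal" where
  "upper_box_dim E = (if bounded E then
     Limsup (at_right 0) (\<lambda>\<delta>. if cover_number \<delta> E = 0 then -\<infinity>
        else ereal (ln (real (cover_number \<delta> E)) / (- ln \<delta>)))
   else \<infinity>)"

definition hausdorff_content :: "real \<Rightarrow> real \<Rightarrow> 'a::metric_space set \<Rightarrow> ennreal" where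
  "hausdorff_content \<delta> s E = (INF U \<in> {U :: nat \<Rightarrow> 'a set. E \<subseteq> (\<Union>n. U n) \<and>
       (\<forall>n. bounded (U n) \<and> diameter (U n) \<le> \<delta>)}. \<Sum>n. ennreal (diameter (U n) powr s))"

definition hausdorff_measure :: "real \<Rightarrow> 'a::metric_space set \<Rightarrow> ennreal" where
  "hausdorff_measure s E = (SUP \<delta> \<in> {0<..}. hausdorff_content \<delta> s E)"

definition hausdorff_dim :: "'a::metric_space set \<Rightarrow> real" where
  "hausdorff_dim E = Inf {s. s > 0 \<and> hausdorff_measure s E = 0}"

definition packing_pre :: "real \<Rightarrow> real \<Rightarrow> 'a::metric_space set \<Rightarrow> ennreal" where
  "packing_pre \<delta> s E = (SUP (I, x, r) \<in> {(I :: nat set, x :: nat \<Rightarrow> 'a, r :: nat \<Rightarrow> real).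
        (\<forall>i\<in>I. x i \<in> E \<and> 0 < r i \<and> r i \<le> \<delta>) \<and>
        (\<forall>i\<in>I. \<forall>j\<in>I. i \<noteq> j \<longrightarrow> cball (x i) (r i) \<inter> cball (x j) (r j) = {})}.
      \<Sum>i. (if i \<in> I then ennreal ((2 * r i) powr s) else 0))"

definition packing_premeasure :: "real \<Rightarrow> 'a::metric_space set \<Rightarrow> ennreal" where
  "packing_premeasure s E = (INF \<delta> \<in> {0<..}. packing_pre \<delta> s E)"

definition packing_measure :: "real \<Rightarrow> 'a::metric_space set \<Rightarrow> ennreal" where
  "packing_measure s E = (INF U \<in> {U :: nat \<Rightarrow> 'a set. E \<subseteq> (\<Union>n. U n)}.
       \<Sum>n. packing_premeasure s (U n))"

definition packing_dim :: "'a::metric_space set \<Rightarrow> real" where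
  "packing_dim E = Inf {s. s > 0 \<and> packing_measure s E = 0}"

definition similitude :: "('a::metric_space \<Rightarrow> 'a) \<Rightarrow> real \<Rightarrow> bool" where
  "similitude S r \<longleftrightarrow> (\<forall>x y. dist (S x) (S y) = r * dist x y)"

definition self_similar_OSC :: "'a::metric_space set \<Rightarrow> bool" where
  "self_similar_OSC K \<longleftrightarrow> compact K \<and> K \<noteq> {} \<and>
     (\<exists>m::nat. \<exists>S r. m \<ge> 1 \<and>
        (\<forall>i<m. 0 < r i \<and> r i < 1 \<and> similitude (S i) (r i)) \<and>
        K = (\<Union>i<m. S i ` K) \<and>
        (\<exists>V. open V \<and> V \<noteq> {} \<and> bounded V \<and> (\<forall>i<m. S i ` V \<subseteq> V) \<and>
           (\<forall>i<m. \<forall>j<m. i \<noteq> j \<longrightarrow> S i ` V \<inter> S j ` V = {})))"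

definition closed_cube :: "nat \<Rightarrow> int^'n \<Rightarrow> (real^'n) set" where
  "closed_cube j k = {x. \<forall>m. real_of_int (k$m) * 2 powr (- real j) \<le> x$m \<and>
                              x$m \<le> (real_of_int (k$m) + 1) * 2 powr (- real j)}"

definition Kn :: "nat \<Rightarrow> nat \<Rightarrow> (nat \<Rightarrow> (int^'n) set) \<Rightarrow> nat \<Rightarrow> (real^'n) set" where
  "Kn t N \<Theta> n = (\<Union>k\<in>\<Theta> n. closed_cube (t + N * n) k)"

text \<open>A closed dyadic cube of side 2^-j
  is represented by its integer corner k (the cube closed_cube j k);
  Theta n is the set of corners of the cubes of side 2^-(t+Nn), and mu n maps it
  injectively to corners of cubes of side 2^-(Nn); psi^(1)_mu = psi 1 (2^(Nn) . - mu).\<close>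
definition adapted_cantor_data ::
  "(nat \<Rightarrow> real^'n \<Rightarrow> real) \<Rightarrow> real \<Rightarrow> (real^'n) set \<Rightarrow> nat \<Rightarrow> nat \<Rightarrow> real \<Rightarrow>
     (nat \<Rightarrow> (int^'n) set) \<Rightarrow> (nat \<Rightarrow> int^'n \<Rightarrow> int^'n) \<Rightarrow> bool" where
  "adapted_cantor_data \<psi> d' K t N a \<Theta> \<mu> \<longleftrightarrow>
     self_similar_OSC K \<and> hausdorff_dim K = packing_dim K \<and> hausdorff_dim K \<ge> d' \<and>
     t \<ge> 1 \<and> N \<ge> 1 \<and> a \<noteq> 0 \<and>
     (\<forall>n. finite (\<Theta> n)) \<and> (\<forall>n. inj_on (\<mu> n) (\<Theta> n)) \<and>
     (\<forall>n. Kn t N \<Theta> (Suc n) \<subseteq> Kn t N \<Theta> n) \<and>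
     K = (\<Inter>n. Kn t N \<Theta> n) \<and>
     (\<forall>n. \<forall>x\<in>Kn t N \<Theta> n. \<forall>Q\<in>\<Theta> n.
        (x \<in> closed_cube (t + N * n) Q \<longrightarrow> a * dil (\<psi> 1) (int (N * n)) (\<mu> n Q) x \<ge> 1) \<and>
        (x \<notin> closed_cube (t + N * n) Q \<longrightarrow> dil (\<psi> 1) (int (N * n)) (\<mu> n Q) x = 0))"

end

theory Submission imports Defs begin

lemma box_count:
  fixes c :: "'n::finite \<Rightarrow> real" and r :: real
  assumes r: "0 \<le> r"
  shows "finite {k::int^'n. \<forall>m. \<bar>c m - real_of_int (k$m)\<bar> \<le> r}"
    and "card {k::int^'n. \<forall>m. \<bar>c m - real_of_int (k$m)\<bar> \<le> r} \<le> (nat \<lceil>2*r\<rceil> + 1) ^ CARD('n)"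
proof -
  define L where "L = nat \<lceil>2*r\<rceil>"
  define I where "I m = {\<lceil>c m - r\<rceil> .. \<lceil>c m - r\<rceil> + int L}" for m
  define S where "S = {k::int^'n. \<forall>m. \<bar>c m - real_of_int (k$m)\<bar> \<le> r}"
  have sub: "S \<subseteq> (\<lambda>g. \<chi> m. g m) ` (PiE UNIV I)"
  proof
    fix k assume k: "k \<in> S"
    have "(\<lambda>m. k$m) \<in> PiE UNIV I"
    proof (auto simp: PiE_def Pi_def I_def)
      fix m
      have h: "\<bar>c m - real_of_int (k$m)\<bar> \<le> r" using k by (auto simp: S_def)
      show "\<lceil>c m - r\<rceil> \<le> k$m" using h by (simp add: ceiling_le_iff abs_le_iff)
      have "c m - r \<le> real_of_int \<lceil>c m - r\<rceil>" by (rule le_of_int_ceiling)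
      then have "real_of_int (k$m) \<le> real_of_int \<lceil>c m - r\<rceil> + 2*r"
        using h by (simp add: abs_le_iff) linarith
      also have "\<dots> \<le> real_of_int \<lceil>c m - r\<rceil> + real L"
        unfolding L_def using r by linarith
      finally show "k$m \<le> \<lceil>c m - r\<rceil> + int L" by linarith
    qed
    then show "k \<in> (\<lambda>g. \<chi> m. g m) ` (PiE UNIV I)"
      by (intro image_eqI[where x="\<lambda>m. k$m"]) auto
  qed
  have fin: "finite (PiE UNIV I)" by (intro finite_PiE) (auto simp: I_def)
  have cI: "card (I m) = L + 1" for m
  proof -
    have "card (I m) = nat (int L + 1)" by (simp add: I_def)
    also have "\<dots> = L + 1" by arith
    finally show ?thesis .
  qed
  have cardI: "card (PiE UNIV I) = (L+1) ^ CARD('n)"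
    by (simp add: card_PiE cI)
  show "finite {k::int^'n. \<forall>m. \<bar>c m - real_of_int (k$m)\<bar> \<le> r}"
    using finite_subset[OF sub finite_imageI[OF fin]] by (simp add: S_def)
  have "card S \<le> card ((\<lambda>g. \<chi> m. g m) ` (PiE UNIV I))"
    by (rule card_mono[OF finite_imageI[OF fin] sub])
  also have "\<dots> \<le> card (PiE UNIV I)" by (rule card_image_le[OF fin])
  finally show "card {k::int^'n. \<forall>m. \<bar>c m - real_of_int (k$m)\<bar> \<le> r} \<le> (nat \<lceil>2*r\<rceil> + 1) ^ CARD('n)"
    using cardI by (simp add: S_def L_def)
qed

lemma integrable_bdd_supp:
  fixes g :: "real^'n \<Rightarrow> real"
  assumes "g \<in> borel_measurable lebesgue" "\<And>x. \<bar>g x\<bar> \<le> M" "\<And>x. g x \<noteq> 0 \<Longrightarrow> norm x \<le> R"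
  shows "integrable lebesgue g"
proof -
  have "cball (0::real^'n) R \<in> sets lebesgue" "emeasure lebesgue (cball (0::real^'n) R) < \<infinity>"
    using lmeasurable_cball[of "0::real^'n" R] by (auto simp: fmeasurable_def)
  then have i: "integrable lebesgue (\<lambda>x. M * indicator (cball (0::real^'n) R) x)" by auto
  have "AE x in lebesgue. norm (g x) \<le> norm (M * indicator (cball 0 R) x)"
  proof (intro AE_I2)
    fix x
    show "norm (g x) \<le> norm (M * indicator (cball 0 R) x)"
    proof (cases "g x = 0")
      case False
      then have "norm x \<le> R" using assms(3) by auto
      then show ?thesis using assms(2)[of x] by (auto simp: indicator_def)
    qed simp
  qed
  from Bochner_Integration.integrable_bound[OF i assms(1) this] show ?thesis .
qed

lemma cont_meas: "continuous_on UNIV (f::real^'n\<Rightarrow>real) \<Longrightarrow> f \<in> borel_measurable lebesgue"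
  by (metis measurable_lborel2 borel_measurable_continuous_onI measurable_completion)

lemma cont_supp_bdd:
  fixes g :: "real^'n \<Rightarrow> real"
  assumes "continuous_on UNIV g" "\<And>x. norm x > R \<Longrightarrow> g x = 0"
  shows "\<exists>M. \<forall>x. \<bar>g x\<bar> \<le> M"
proof -
  have "compact (g ` cball 0 R)"
    by (rule compact_continuous_image) (auto intro: continuous_on_subset[OF assms(1)])
  then obtain B where B: "\<forall>y\<in>g ` cball 0 R. norm y \<le> B"
    using compact_imp_bounded bounded_iff by blast
  have "\<bar>g x\<bar> \<le> max B 0" for x
  proof (cases "norm x > R")
    case True then show ?thesis using assms(2) by simp
  next
    case False then have "x \<in> cball 0 R" by simp
    then show ?thesis using B by (metis image_eqI max.coboundedI1 real_norm_def)
  qed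
  then show ?thesis by blast
qed

lemma dil_cont: "continuous_on UNIV g \<Longrightarrow> continuous_on UNIV (dil g j k)"
  unfolding dil_def
  by (rule continuous_on_compose2[of UNIV g]) (auto intro!: continuous_intros)

lemma dil_supp:
  assumes "\<And>x. norm x > R \<Longrightarrow> g x = 0" "dil g j k x \<noteq> 0"
  shows "norm ((2 powr real_of_int j) *\<^sub>R x - vec_of_int k) \<le> R"
  using assms unfolding dil_def by force

lemma Ck_cont: "Ck (Suc r) f \<Longrightarrow> continuous_on UNIV f"
  by (simp add: differentiable_imp_continuous_on)

lemma sum_inj_delta:
  assumes "inj_on h A" "finite A"
  shows "(\<Sum>Q\<in>A. if k = h Q then v else 0) = (if k \<in> h ` A then v else (0::real))"
proof -
  have "(\<Sum>Q\<in>A. if k = h Q then v else 0) = (\<Sum>k'\<in>h ` A. if k = k' then v else 0)"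
    using sum.reindex[OF assms(1), of "\<lambda>k'. if k = k' then v else 0"] by simp
  also have "\<dots> = (if k \<in> h ` A then v else 0)"
    using assms(2) by (simp add: sum.delta)
  finally show ?thesis .
qed

lemma pow2_pow: "(2 powr y) ^ n = 2 powr (y * real n)"
  by (simp add: powr_realpow[symmetric] powr_powr)

lemma wav_orth:
  fixes \<psi> :: "nat \<Rightarrow> real^'n::finite \<Rightarrow> real"
  assumes "associated_wavelets \<phi> \<psi>" "i \<in> wav_idx TYPE('n)" "1 \<in> wav_idx TYPE('n)"
  shows "(\<integral>x. dil (\<psi> i) (int j) k x * dil (\<psi> 1) (int j') k' x \<partial>lebesgue)
     = (if i = 1 \<and> j = j' \<and> k = k' then 2 powr (- real CARD('n) * real j) else 0)"
proof -
  define A where "A = 2 powr (real CARD('n) * real_of_int (int j) / 2)"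
  define B where "B = 2 powr (real CARD('n) * real_of_int (int j') / 2)"
  have on: "orthonormal_on (wav_idx TYPE('n) \<times> (UNIV :: int set) \<times> (UNIV :: (int^'n) set))
        (\<lambda>(i, j, k) x. 2 powr (real CARD('n) * real_of_int j / 2) * dil (\<psi> i) j k x)"
    using assms(1) unfolding associated_wavelets_def onb_L2_def by blast
  have e1: "(\<integral>x. (A * dil (\<psi> i) (int j) k x) * (B * dil (\<psi> 1) (int j') k' x) \<partial>lebesgue)
      = (if (i, int j, k) = (1, int j', k') then 1 else 0)"
  proof -
    have "(\<integral>x. (\<lambda>(i, j, k) x. 2 powr (real CARD('n) * real_of_int j / 2) * dil (\<psi> i) j k x) (i, int j, k) x *
       (\<lambda>(i, j, k) x. 2 powr (real CARD('n) * real_of_int j / 2) * dil (\<psi> i) j k x) (1, int j', k') x \<partial>lebesgue)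
      = (if (i, int j, k) = (1, int j', k') then 1 else 0)"
      using on assms(2,3) unfolding orthonormal_on_def by blast
    then show ?thesis unfolding A_def B_def by (simp only: prod.case)
  qed
  have e2: "(\<integral>x. (A * dil (\<psi> i) (int j) k x) * (B * dil (\<psi> 1) (int j') k' x) \<partial>lebesgue)
      = A * B * (\<integral>x. dil (\<psi> i) (int j) k x * dil (\<psi> 1) (int j') k' x \<partial>lebesgue)"
  proof -
    have "(\<lambda>x. (A * dil (\<psi> i) (int j) k x) * (B * dil (\<psi> 1) (int j') k' x))
       = (\<lambda>x. (A * B) * (dil (\<psi> i) (int j) k x * dil (\<psi> 1) (int j') k' x))"
      by (rule ext) (simp add: algebra_simps)
    then show ?thesis by (simp only: integral_mult_right_zero)
  qed
  have AB: "A > 0" "B > 0" by (auto simp: A_def B_def)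
  have e3: "i = 1 \<and> j = j' \<and> k = k' \<Longrightarrow> A * B = 2 powr (real CARD('n) * real j)"
    by (auto simp: A_def B_def powr_add[symmetric] mult.commute)
  show ?thesis
  proof (cases "i = 1 \<and> j = j' \<and> k = k'")
    case True
    with e1 e2 e3 have "2 powr (real CARD('n) * real j) * (\<integral>x. dil (\<psi> i) (int j) k x * dil (\<psi> 1) (int j') k' x \<partial>lebesgue) = 1"
      by simp
    then show ?thesis using True by (simp add: powr_minus field_simps)
  next
    case False
    then have neq: "(i, int j, k) \<noteq> (1, int j', k')" by auto
    have "A * B * (\<integral>x. dil (\<psi> i) (int j) k x * dil (\<psi> 1) (int j') k' x \<partial>lebesgue) = 0"
      using e1 e2 neq by (simp only: if_False)
    then show ?thesis using False AB by simp
  qed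
qed

lemma vec_of_int_nth[simp]: "vec_of_int k $ m = real_of_int (k $ m)"
  by (simp add: vec_of_int_def)

lemma outside_box_zero:
  fixes h :: "real^'n \<Rightarrow> real" and y :: "real^'n"
  assumes "\<And>x. norm x > R \<Longrightarrow> h x = 0" "\<not> (\<forall>m. \<bar>y$m - real_of_int (k$m)\<bar> \<le> R)"
  shows "h (y - vec_of_int k) = 0"
proof -
  obtain m where m: "\<bar>y$m - real_of_int (k$m)\<bar> > R" using assms(2) by (auto simp: not_le)
  have "\<bar>(y - vec_of_int k)$m\<bar> \<le> norm (y - vec_of_int k)" by (rule component_le_norm_cart)
  then have "norm (y - vec_of_int k) > R" using m by simp
  then show ?thesis using assms(1) by blast
qed

lemma dil_supp2:
  assumes "\<And>x. norm x > R \<Longrightarrow> g x = 0" "dil g (int j) k x \<noteq> 0"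
  shows "norm x \<le> R + norm (vec_of_int k)"
proof -
  define l where "l = (2::real) powr real_of_int (int j)"
  have l1: "l \<ge> 1" unfolding l_def by (rule ge_one_powr_ge_zero) auto
  have "norm (l *\<^sub>R x - vec_of_int k) \<le> R" using dil_supp[OF assms] unfolding l_def .
  then have "norm (l *\<^sub>R x) \<le> R + norm (vec_of_int k)"
    using norm_triangle_sub[of "l *\<^sub>R x" "vec_of_int k"] by linarith
  moreover have "norm x \<le> norm (l *\<^sub>R x)" using l1 by (simp add: mult_le_cancel_right1)
  ultimately show ?thesis by linarith
qed

lemma infsum_supp:
  fixes F :: "'a \<Rightarrow> real"
  assumes "finite S" "\<And>k. k \<notin> S \<Longrightarrow> F k = 0"
  shows "infsum F UNIV = sum F S"
proof -
  have "infsum F UNIV = infsum F S" by (rule infsum_cong_neutral) (use assms(2) in auto)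
  then show ?thesis using assms(1) by simp
qed

lemma summable_supp:
  fixes F :: "'a \<Rightarrow> real"
  assumes "finite S" "\<And>k. k \<notin> S \<Longrightarrow> F k = 0"
  shows "F summable_on UNIV"
proof -
  have "F summable_on UNIV \<longleftrightarrow> F summable_on S" by (rule summable_on_cong_neutral) (use assms(2) in auto)
  then show ?thesis using assms(1) by simp
qed

lemma cube_count:
  fixes A :: "(real^'n) set"
  assumes A: "bounded A" "diameter A \<le> 2 powr (- real j)"
  shows "finite {k::int^'n. closed_cube j k \<inter> A \<noteq> {}}"
    and "card {k::int^'n. closed_cube j k \<inter> A \<noteq> {}} \<le> 4 ^ CARD('n)"
proof -
  define \<delta> where "\<delta> = (2::real) powr (- real j)"
  have \<delta>0: "\<delta> > 0" by (simp add: \<delta>_def)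
  define T where "T = {k::int^'n. closed_cube j k \<inter> A \<noteq> {}}"
  have "finite T \<and> card T \<le> 4 ^ CARD('n)"
  proof (cases "A = {}")
    case True then show ?thesis by (simp add: T_def)
  next
    case False
    then obtain y where y: "y \<in> A" by blast
    define S where "S = {k::int^'n. \<forall>m. \<bar>(y$m / \<delta> - 1/2) - real_of_int (k$m)\<bar> \<le> 3/2}"
    have TS: "T \<subseteq> S"
    proof
      fix k assume "k \<in> T"
      then obtain x where x: "x \<in> closed_cube j k" "x \<in> A" by (auto simp: T_def)
      show "k \<in> S" unfolding S_def
      proof (intro CollectI allI)
        fix m
        have c1: "real_of_int (k$m) * \<delta> \<le> x$m" and c2: "x$m \<le> (real_of_int (k$m) + 1) * \<delta>"
          using x(1) by (auto simp: closed_cube_def \<delta>_def)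
        have "\<bar>x$m - y$m\<bar> \<le> norm (x - y)" using component_le_norm_cart[of "x - y" m] by simp
        also have "\<dots> = dist x y" by (simp add: dist_norm)
        also have "\<dots> \<le> diameter A" by (rule diameter_bounded_bound[OF A(1) x(2) y])
        also have "\<dots> \<le> \<delta>" using A(2) by (simp add: \<delta>_def)
        finally have xy: "\<bar>x$m - y$m\<bar> \<le> \<delta>" .
        have "real_of_int (k$m) * \<delta> \<le> y$m + \<delta>" using c1 xy by linarith
        then have u: "real_of_int (k$m) \<le> y$m / \<delta> + 1" using \<delta>0 by (simp add: field_simps)
        have "y$m - \<delta> \<le> (real_of_int (k$m) + 1) * \<delta>" using c2 xy by linarith
        then have l: "y$m / \<delta> - 2 \<le> real_of_int (k$m)" using \<delta>0 by (simp add: field_simps)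
        show "\<bar>(y$m / \<delta> - 1/2) - real_of_int (k$m)\<bar> \<le> 3/2" using u l by (simp only: abs_le_iff) linarith
      qed
    qed
    have fS: "finite S" and cS: "card S \<le> (nat \<lceil>2 * (3/2::real)\<rceil> + 1) ^ CARD('n)"
      using box_count[of "3/2" "\<lambda>m. y$m / \<delta> - 1/2"] by (simp_all add: S_def)
    have "nat \<lceil>2 * (3/2::real)\<rceil> + 1 = 4" by simp
    then have "card S \<le> 4 ^ CARD('n)" using cS by simp
    then show ?thesis using TS fS card_mono[OF fS TS] finite_subset[OF TS fS] by simp
  qed
  then show "finite {k::int^'n. closed_cube j k \<inter> A \<noteq> {}}"
    and "card {k::int^'n. closed_cube j k \<inter> A \<noteq> {}} \<le> 4 ^ CARD('n)" by (simp_all add: T_def)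
qed

lemma count_bound:
  fixes K G :: "(real^'n) set" and \<Theta> :: "nat \<Rightarrow> (int^'n) set"
  assumes Kc: "compact K" and GK: "G \<subseteq> K" and ub: "upper_box_dim G < ereal \<alpha>1"
    and N: "N \<ge> 1" and t: "t \<ge> 1" and fin: "\<And>n. finite (\<Theta> n)"
  shows "\<exists>C>0. \<forall>n. real (card {Q \<in> \<Theta> n. closed_cube (t+N*n) Q \<inter> G \<noteq> {}}) \<le> C * 2 powr (\<alpha>1 * real (N*n))"
proof -
  define \<Theta>' where "\<Theta>' n = {Q \<in> \<Theta> n. closed_cube (t+N*n) Q \<inter> G \<noteq> {}}" for n
  have Gb: "bounded G" using GK compact_imp_bounded[OF Kc] bounded_subset by blast
  define Fb where "Fb \<delta> = (if cover_number \<delta> G = 0 then -\<infinity>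
        else ereal (ln (real (cover_number \<delta> G)) / (- ln \<delta>)))" for \<delta> :: real
  have "upper_box_dim G = Limsup (at_right 0) Fb" unfolding upper_box_dim_def Fb_def using Gb by simp
  then have ev: "eventually (\<lambda>\<delta>. Fb \<delta> < ereal \<alpha>1) (at_right 0)" using Limsup_lessD ub by metis
  define \<delta> where "\<delta> n = (2::real) powr (- real (t + N*n))" for n
  have \<delta>0: "\<delta> n > 0" for n by (simp add: \<delta>_def)
  have \<delta>eq: "\<delta> n = (1/2) ^ (t + N*n)" for n
  proof -
    have "\<delta> n = inverse (2 powr real (t + N*n))" unfolding \<delta>_def by (rule powr_minus)
    also have "2 powr real (t + N*n) = 2 ^ (t + N*n)" by (rule powr_realpow) simp
    finally show ?thesis by (simp add: power_one_over inverse_eq_divide)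
  qed
  have \<delta>lim: "\<delta> \<longlonglongrightarrow> 0"
  proof (rule tendsto_sandwich[where f="\<lambda>n. 0" and h="\<lambda>n. (1/2::real) ^ n"])
    show "eventually (\<lambda>n. 0 \<le> \<delta> n) sequentially" using \<delta>0 by (simp add: less_imp_le)
    have "n \<le> t + N*n" for n using N by (metis le_add2 mult_le_mono1 mult_1 order_trans)
    then show "eventually (\<lambda>n. \<delta> n \<le> (1/2) ^ n) sequentially"
      unfolding \<delta>eq by (intro always_eventually allI power_decreasing) auto
    show "(\<lambda>n. 0) \<longlonglongrightarrow> (0::real)" by simp
    show "(\<lambda>n. (1/2::real) ^ n) \<longlonglongrightarrow> 0" by (rule LIMSEQ_power_zero) simp
  qed
  have "filterlim \<delta> (at_right 0) sequentially"
    by (rule tendsto_imp_filterlim_at_right[OF \<delta>lim]) (use \<delta>0 in simp)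
  then have "eventually (\<lambda>n. Fb (\<delta> n) < ereal \<alpha>1) sequentially"
    using ev unfolding filterlim_iff by blast
  then obtain n0 where n0: "\<And>n. n \<ge> n0 \<Longrightarrow> Fb (\<delta> n) < ereal \<alpha>1"
    unfolding eventually_sequentially by blast
  define D where "D = real (4 ^ CARD('n)) * 2 powr (\<alpha>1 * real t)"
  have big: "real (card (\<Theta>' n)) \<le> D * 2 powr (\<alpha>1 * real (N*n))" if nn0: "n \<ge> n0" for n
  proof -
    define j where "j = t + N*n"
    have \<delta>j: "\<delta> n = 2 powr (- real j)" by (simp add: \<delta>_def j_def)
    define Cs where "Cs = {card C |C. finite C \<and> G \<subseteq> \<Union>C \<and> (\<forall>A\<in>C. bounded A \<and> diameter A \<le> \<delta> n)}"
    have "Cs \<noteq> {}"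
    proof -
      obtain k where k: "finite k" "k \<subseteq> K" "K \<subseteq> (\<Union>x\<in>k. ball x (\<delta> n / 2))"
        using seq_compact_imp_totally_bounded[OF compact_imp_seq_compact[OF Kc]] \<delta>0[of n]
        by (meson half_gt_zero)
      define C0 where "C0 = (\<lambda>x. cball x (\<delta> n / 2)) ` k"
      have "finite C0" using k(1) by (simp add: C0_def)
      moreover have "G \<subseteq> \<Union>C0"
      proof
        fix x assume "x \<in> G"
        then have "x \<in> K" using GK by blast
        then obtain z where "z \<in> k" "x \<in> ball z (\<delta> n / 2)" using k(3) by blast
        then show "x \<in> \<Union>C0" unfolding C0_def using ball_subset_cball by blast
      qed
      moreover have "\<forall>A\<in>C0. bounded A \<and> diameter A \<le> \<delta> n" using \<delta>0[of n] by (auto simp: C0_def)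
      ultimately show ?thesis unfolding Cs_def by blast
    qed
    then have "cover_number (\<delta> n) G \<in> Cs" unfolding cover_number_def Cs_def[symmetric] by (rule Inf_nat_def1)
    then obtain Cv where Cv: "cover_number (\<delta> n) G = card Cv" "finite Cv" "G \<subseteq> \<Union>Cv"
      "\<And>A. A \<in> Cv \<Longrightarrow> bounded A \<and> diameter A \<le> \<delta> n" unfolding Cs_def by blast
    define T where "T A = {k::int^'n. closed_cube j k \<inter> A \<noteq> {}}" for A
    have TA: "finite (T A) \<and> card (T A) \<le> 4 ^ CARD('n)" if "A \<in> Cv" for A
      using cube_count[of A j] Cv(4)[OF that] by (simp add: T_def \<delta>j)
    have sub: "\<Theta>' n \<subseteq> (\<Union>A\<in>Cv. T A)"
    proof
      fix Q assume "Q \<in> \<Theta>' n"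
      then obtain z where z: "z \<in> closed_cube j Q" "z \<in> G" by (auto simp: \<Theta>'_def j_def)
      then obtain A where "A \<in> Cv" "z \<in> A" using Cv(3) by blast
      then show "Q \<in> (\<Union>A\<in>Cv. T A)" using z by (auto simp: T_def)
    qed
    have finU: "finite (\<Union>A\<in>Cv. T A)" using Cv(2) TA by blast
    have "card (\<Theta>' n) \<le> card (\<Union>A\<in>Cv. T A)" by (rule card_mono[OF finU sub])
    also have "\<dots> \<le> (\<Sum>A\<in>Cv. card (T A))" by (rule card_UN_le[OF Cv(2)])
    also have "\<dots> \<le> card Cv * 4 ^ CARD('n)" using sum_bounded_above[of Cv "\<lambda>A. card (T A)" "4 ^ CARD('n)"] TA by simp
    finally have c1: "real (card (\<Theta>' n)) \<le> real (card Cv) * real (4 ^ CARD('n))"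
      by (metis of_nat_le_iff of_nat_mult)
    have p2: "2 powr (\<alpha>1 * real (t + N*n)) = 2 powr (\<alpha>1 * real t) * 2 powr (\<alpha>1 * real (N*n))"
      by (simp add: powr_add[symmetric] algebra_simps)
    show ?thesis
    proof (cases "card Cv = 0")
      case True
      then have "real (card (\<Theta>' n)) \<le> 0" using c1 by simp
      then show ?thesis unfolding D_def by (simp add: mult_nonneg_nonneg)
    next
      case False
      then have "Fb (\<delta> n) = ereal (ln (real (card Cv)) / (- ln (\<delta> n)))" by (simp add: Fb_def Cv(1))
      then have lt: "ln (real (card Cv)) / (- ln (\<delta> n)) < \<alpha>1" using n0[OF nn0] by simp
      have lnd: "- ln (\<delta> n) = real j * ln 2" by (simp add: \<delta>j ln_powr)
      have "j > 0" using t by (simp add: j_def)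
      then have "real j > 0" by simp
      then have jpos: "real j * ln 2 > 0" by simp
      have "ln (real (card Cv)) < \<alpha>1 * (real j * ln 2)" using lt jpos unfolding lnd by (simp add: divide_less_eq)
      then have "exp (ln (real (card Cv))) < exp (\<alpha>1 * real j * ln 2)" by (simp add: mult.assoc)
      then have "real (card Cv) < 2 powr (\<alpha>1 * real j)" using False by (simp add: powr_def)
      then have "real (card (\<Theta>' n)) \<le> 2 powr (\<alpha>1 * real j) * real (4 ^ CARD('n))"
        using c1 by (smt (verit) mult_right_mono of_nat_0_le_iff)
      then show ?thesis unfolding D_def j_def p2 by (simp add: mult_ac)
    qed
  qed
  define C where "C = D + (\<Sum>m<n0. real (card (\<Theta> m)) * 2 powr (- \<alpha>1 * real (N*m)))"
  have D0: "D > 0" by (simp add: D_def)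
  have S0: "(\<Sum>m<n0. real (card (\<Theta> m)) * 2 powr (- \<alpha>1 * real (N*m))) \<ge> 0" by (intro sum_nonneg) simp
  have "real (card (\<Theta>' n)) \<le> C * 2 powr (\<alpha>1 * real (N*n))" for n
  proof (cases "n \<ge> n0")
    case True
    have "D * 2 powr (\<alpha>1 * real (N*n)) \<le> C * 2 powr (\<alpha>1 * real (N*n))"
      using S0 by (intro mult_right_mono) (auto simp: C_def)
    then show ?thesis using big[OF True] by linarith
  next
    case False
    have "card (\<Theta>' n) \<le> card (\<Theta> n)" by (rule card_mono[OF fin]) (auto simp: \<Theta>'_def)
    then have "real (card (\<Theta>' n)) \<le> real (card (\<Theta> n)) * 2 powr (- \<alpha>1 * real (N*n)) * 2 powr (\<alpha>1 * real (N*n))"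
      by (simp add: mult.assoc powr_add[symmetric])
    also have "\<dots> \<le> C * 2 powr (\<alpha>1 * real (N*n))"
    proof (intro mult_right_mono)
      have "real (card (\<Theta> n)) * 2 powr (- \<alpha>1 * real (N*n)) \<le> (\<Sum>m<n0. real (card (\<Theta> m)) * 2 powr (- \<alpha>1 * real (N*m)))"
        using False by (intro member_le_sum) auto
      then show "real (card (\<Theta> n)) * 2 powr (- \<alpha>1 * real (N*n)) \<le> C" using D0 by (simp add: C_def)
    qed simp
    finally show ?thesis .
  qed
  moreover have "C > 0" using D0 S0 by (simp add: C_def)
  ultimately show ?thesis unfolding \<Theta>'_def by blast
qed

theorem theorem4p7:
  fixes \<phi> :: "real^'n \<Rightarrow> real" and \<psi> :: "nat \<Rightarrow> real^'n \<Rightarrow> real"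
    and s p d' \<alpha> a :: real and t N :: nat
    and K G :: "(real^'n) set"
    and \<Theta> :: "nat \<Rightarrow> (int^'n) set" and \<mu> :: "nat \<Rightarrow> int^'n \<Rightarrow> int^'n"
  assumes wsetup: "wavelet_setup s \<phi> \<psi>"
    and supp: "compactly_supported \<phi>" "\<forall>i\<in>wav_idx TYPE('n). compactly_supported (\<psi> i)"
    and s: "0 \<le> s" and p: "1 \<le> p"
    and d': "0 < d'" "d' < real CARD('n)"
    and cantor: "adapted_cantor_data \<psi> d' K t N a \<Theta> \<mu>"
    and \<alpha>: "max 0 (real CARD('n) - s * p) < \<alpha>" "\<alpha> < d'"
    and G: "G \<subseteq> K" "upper_box_dim G < ereal \<alpha>"
  shows "\<exists>f. besov \<phi> \<psi> s p 1 f \<and> besov_norm \<phi> \<psi> s p 1 f \<le> 1 \<and>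
    (\<forall>x\<in>K. convergent (\<lambda>j. Pop \<phi> \<psi> f j x)) \<and>
    (\<forall>x\<in>K. \<forall>j. Rop \<psi> f j x \<ge> 0) \<and>
    (\<forall>x\<in>G. liminf (\<lambda>j. if Rop \<psi> f j x = 0 then -\<infinity>
               else ereal (ln \<bar>Rop \<psi> f j x\<bar> / (real j * ln 2)))
           \<ge> ereal ((real CARD('n) - s * p - \<alpha>) / p))"
proof -
  define d where "d = real CARD('n)"
  have one_idx: "1 \<in> wav_idx TYPE('n)"
  proof -
    have "(2::nat) ^ 1 \<le> 2 ^ CARD('n)" by (rule power_increasing) auto
    then show ?thesis by (auto simp: wav_idx_def)
  qed
  have K_eq: "K = (\<Inter>n. Kn t N \<Theta> n)" and Nge: "N \<ge> 1" and tge: "t \<ge> 1" and a0: "a \<noteq> 0"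
    and fin\<Theta>: "\<And>n. finite (\<Theta> n)" and inj\<mu>: "\<And>n. inj_on (\<mu> n) (\<Theta> n)" and Kcomp: "compact K"
    and cond: "\<And>n x Q. x \<in> Kn t N \<Theta> n \<Longrightarrow> Q \<in> \<Theta> n \<Longrightarrow>
        (x \<in> closed_cube (t + N * n) Q \<longrightarrow> a * dil (\<psi> 1) (int (N * n)) (\<mu> n Q) x \<ge> 1) \<and>
        (x \<notin> closed_cube (t + N * n) Q \<longrightarrow> dil (\<psi> 1) (int (N * n)) (\<mu> n Q) x = 0)"
    using cantor unfolding adapted_cantor_data_def self_similar_OSC_def by auto
  have wav: "associated_wavelets \<phi> \<psi>" using wsetup unfolding wavelet_setup_def by blast
  have cont\<psi>: "\<And>i. i \<in> wav_idx TYPE('n) \<Longrightarrow> continuous_on UNIV (\<psi> i)"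
    using wsetup unfolding wavelet_setup_def by (auto intro: differentiable_imp_continuous_on)
  obtain R\<psi>0 where R\<psi>0: "\<And>x. norm x > R\<psi>0 \<Longrightarrow> \<psi> 1 x = 0"
    using supp(2) one_idx unfolding compactly_supported_def by blast
  define R1 where "R1 = max R\<psi>0 0"
  have R1: "R1 \<ge> 0" "\<And>x. norm x > R1 \<Longrightarrow> \<psi> 1 x = 0" using R\<psi>0 by (auto simp: R1_def)
  obtain M\<psi> where M\<psi>: "\<And>y. \<bar>\<psi> 1 y\<bar> \<le> M\<psi>"
    using cont_supp_bdd[OF cont\<psi>[OF one_idx] R1(2)] by blast
  have M\<psi>0: "M\<psi> \<ge> 0" using M\<psi>[of 0] by linarith
  obtain RK where RK: "\<And>z. z \<in> K \<Longrightarrow> norm z \<le> RK"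
    using compact_imp_bounded[OF Kcomp] unfolding bounded_iff by blast
  define B where "B = real ((nat \<lceil>2*R1\<rceil> + 1) ^ CARD('n))"
  have B0: "B \<ge> 0" by (simp add: B_def)
  have Gbdd: "bounded G" using G(1) compact_imp_bounded[OF Kcomp] bounded_subset by blast
  obtain \<alpha>1 where \<alpha>1: "upper_box_dim G < ereal \<alpha>1" "\<alpha>1 < \<alpha>"
  proof -
    obtain z where z: "upper_box_dim G < z" "z < ereal \<alpha>" using dense[OF G(2)] by blast
    then obtain r where "z = ereal r" by (cases z) auto
    then show ?thesis using that z by auto
  qed
  define U where "U = (s*p + \<alpha> - d)/p"
  define L1 where "L1 = (s*p + \<alpha>1 - d)/p"
  define \<gamma> where "\<gamma> = (max 0 L1 + U)/2"
  have p0: "p > 0" using p by simp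
  have U0: "U > 0" using \<alpha> p0 by (auto simp: U_def d_def field_simps)
  have L1U: "L1 < U" using \<alpha>1 p0 by (auto simp: U_def L1_def divide_strict_right_mono)
  have \<gamma>0: "0 < \<gamma>" and \<gamma>1: "L1 < \<gamma>" and \<gamma>2: "\<gamma> < U"
    using U0 L1U by (auto simp: \<gamma>_def)
  define \<Theta>' where "\<Theta>' n = {Q \<in> \<Theta> n. closed_cube (t + N*n) Q \<inter> G \<noteq> {}}" for n
  have fin\<Theta>': "\<And>n. finite (\<Theta>' n)" and sub\<Theta>': "\<And>n. \<Theta>' n \<subseteq> \<Theta> n"
    using fin\<Theta> by (auto simp: \<Theta>'_def)
  have inj\<mu>': "\<And>n. inj_on (\<mu> n) (\<Theta>' n)" using inj\<mu> sub\<Theta>' inj_on_subset by blast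
  obtain C where C0: "C > 0" and Cb: "\<And>n. real (card (\<Theta>' n)) \<le> C * 2 powr (\<alpha>1 * real (N*n))"
  proof -
    have "\<exists>C>0. \<forall>n. real (card (\<Theta>' n)) \<le> C * 2 powr (\<alpha>1 * real (N*n))"
      unfolding \<Theta>'_def by (rule count_bound[OF Kcomp G(1) \<alpha>1(1) Nge tge]) (rule fin\<Theta>)
    then show ?thesis using that by blast
  qed
  define r0 where "r0 = 2 powr (-\<gamma> * real N)"
  have r0: "0 < r0" "r0 < 1"
  proof -
    have "\<gamma> * real N > 0" using \<gamma>0 Nge by simp
    then have "2 powr (-\<gamma> * real N) < 2 powr 0" by (intro powr_less_mono) auto
    then show "r0 < 1" by (simp add: r0_def)
  qed (simp add: r0_def)
  define c where "c n = r0 ^ n" for n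
  have c_eq: "c n = 2 powr (-\<gamma> * real (N*n))" for n
    by (simp add: c_def r0_def pow2_pow mult_ac)
  have c0: "c n > 0" for n using r0 by (simp add: c_def)
  have c_fun: "c = (\<lambda>n. r0 ^ n)" by (rule ext) (simp add: c_def)
  have summ_c: "summable c" unfolding c_fun using r0 by (intro summable_geometric) simp
  define \<psi>n where "\<psi>n n Q = dil (\<psi> 1) (int (N*n)) (\<mu> n Q)" for n Q
  define g where "g n x = (\<Sum>Q\<in>\<Theta>' n. c n * a * \<psi>n n Q x)" for n x
  define Bg where "Bg = \<bar>a\<bar> * M\<psi> * B"
  have Bg0: "Bg \<ge> 0" using M\<psi>0 B0 by (simp add: Bg_def)
  have g_bound: "\<And>n x. \<bar>g n x\<bar> \<le> c n * Bg"
  proof -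
    fix n and x :: "real^'n"
    define y where "y = (2 powr real_of_int (int (N*n))) *\<^sub>R x"
    define S where "S = {k::int^'n. \<forall>m. \<bar>y$m - real_of_int (k$m)\<bar> \<le> R1}"
    have finS: "finite S" and cardS: "card S \<le> (nat \<lceil>2*R1\<rceil> + 1) ^ CARD('n)"
      using box_count[OF R1(1), of "\<lambda>m. y$m"] by (simp_all add: S_def)
    have psi_eq: "\<psi>n n Q x = \<psi> 1 (y - vec_of_int (\<mu> n Q))" for Q
      by (simp add: \<psi>n_def dil_def y_def)
    have "\<bar>g n x\<bar> \<le> (\<Sum>Q\<in>\<Theta>' n. \<bar>c n * a * \<psi>n n Q x\<bar>)"
      unfolding g_def by (rule sum_abs)
    also have "\<dots> = c n * \<bar>a\<bar> * (\<Sum>Q\<in>\<Theta>' n. \<bar>\<psi> 1 (y - vec_of_int (\<mu> n Q))\<bar>)"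
      using c0[of n] by (simp add: abs_mult sum_distrib_left psi_eq mult_ac)
    finally have st1: "\<bar>g n x\<bar> \<le> c n * \<bar>a\<bar> * (\<Sum>Q\<in>\<Theta>' n. \<bar>\<psi> 1 (y - vec_of_int (\<mu> n Q))\<bar>)" .
    have "(\<Sum>Q\<in>\<Theta>' n. \<bar>\<psi> 1 (y - vec_of_int (\<mu> n Q))\<bar>)
        = (\<Sum>k\<in>\<mu> n ` \<Theta>' n. \<bar>\<psi> 1 (y - vec_of_int k)\<bar>)"
      by (simp add: sum.reindex[OF inj\<mu>'])
    also have "\<dots> = (\<Sum>k\<in>\<mu> n ` \<Theta>' n \<inter> S. \<bar>\<psi> 1 (y - vec_of_int k)\<bar>)"
    proof (rule sum.mono_neutral_right)
      show "finite (\<mu> n ` \<Theta>' n)" using fin\<Theta>' by simp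
      show "\<forall>k\<in>\<mu> n ` \<Theta>' n - \<mu> n ` \<Theta>' n \<inter> S. \<bar>\<psi> 1 (y - vec_of_int k)\<bar> = 0"
      proof
        fix k assume "k \<in> \<mu> n ` \<Theta>' n - \<mu> n ` \<Theta>' n \<inter> S"
        then have "\<not> (\<forall>m. \<bar>y$m - real_of_int (k$m)\<bar> \<le> R1)" by (auto simp: S_def)
        then show "\<bar>\<psi> 1 (y - vec_of_int k)\<bar> = 0"
          using outside_box_zero[where h="\<psi> 1" and R=R1, OF R1(2)] by simp
      qed
    qed auto
    also have "\<dots> \<le> (\<Sum>k\<in>\<mu> n ` \<Theta>' n \<inter> S. M\<psi>)"
      by (rule sum_mono) (rule M\<psi>)
    also have "\<dots> = real (card (\<mu> n ` \<Theta>' n \<inter> S)) * M\<psi>" by simp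
    also have "\<dots> \<le> B * M\<psi>"
    proof (rule mult_right_mono[OF _ M\<psi>0])
      have "card (\<mu> n ` \<Theta>' n \<inter> S) \<le> card S" by (rule card_mono[OF finS]) auto
      then show "real (card (\<mu> n ` \<Theta>' n \<inter> S)) \<le> B" using cardS unfolding B_def
        by (metis of_nat_le_iff order_trans)
    qed
    finally have "(\<Sum>Q\<in>\<Theta>' n. \<bar>\<psi> 1 (y - vec_of_int (\<mu> n Q))\<bar>) \<le> B * M\<psi>" .
    then have "c n * \<bar>a\<bar> * (\<Sum>Q\<in>\<Theta>' n. \<bar>\<psi> 1 (y - vec_of_int (\<mu> n Q))\<bar>) \<le> c n * \<bar>a\<bar> * (B * M\<psi>)"
      using c0[of n] by (intro mult_left_mono) auto
    with st1 show "\<bar>g n x\<bar> \<le> c n * Bg"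
      by (simp add: Bg_def mult_ac)
  qed
  have inKn: "\<And>x n. x \<in> K \<Longrightarrow> x \<in> Kn t N \<Theta> n" using K_eq by blast
  have g_supp: "\<And>n x. g n x \<noteq> 0 \<Longrightarrow> norm x \<le> RK + 2*R1"
  proof -
    fix n x assume gx: "g n x \<noteq> 0"
    then obtain Q where Q: "Q \<in> \<Theta>' n" "\<psi>n n Q x \<noteq> 0"
      unfolding g_def by (metis (no_types, lifting) mult_zero_right sum.neutral)
    then obtain z where z: "z \<in> closed_cube (t + N*n) Q" "z \<in> G" by (auto simp: \<Theta>'_def)
    have zK: "z \<in> K" using z G(1) by blast
    have Qin: "Q \<in> \<Theta> n" using Q(1) sub\<Theta>' by blast
    have "a * \<psi>n n Q z \<ge> 1" using cond[where x=z and n=n and Q=Q, OF inKn[OF zK] Qin] z(1)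
      by (auto simp: \<psi>n_def)
    then have "\<psi>n n Q z \<noteq> 0" by auto
    define l where "l = (2::real) powr real_of_int (int (N*n))"
    have l1: "l \<ge> 1" unfolding l_def by (rule ge_one_powr_ge_zero) auto
    have nx: "norm (l *\<^sub>R x - vec_of_int (\<mu> n Q)) \<le> R1"
      using dil_supp[where g="\<psi> 1" and R=R1, OF R1(2) Q(2)[unfolded \<psi>n_def]] unfolding l_def .
    have nz: "norm (l *\<^sub>R z - vec_of_int (\<mu> n Q)) \<le> R1"
      using dil_supp[where g="\<psi> 1" and R=R1, OF R1(2) \<open>\<psi>n n Q z \<noteq> 0\<close>[unfolded \<psi>n_def]] unfolding l_def .
    have "l * norm (x - z) = norm ((l *\<^sub>R x - vec_of_int (\<mu> n Q)) - (l *\<^sub>R z - vec_of_int (\<mu> n Q)))"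
      using l1 by (simp add: scaleR_diff_right[symmetric])
    also have "\<dots> \<le> 2*R1" using norm_triangle_ineq4[of "l *\<^sub>R x - vec_of_int (\<mu> n Q)" "l *\<^sub>R z - vec_of_int (\<mu> n Q)"] nx nz
      by linarith
    finally have "l * norm (x - z) \<le> 2*R1" .
    moreover have "norm (x - z) \<le> l * norm (x - z)" using l1 by (simp add: mult_le_cancel_right1)
    ultimately have "norm (x - z) \<le> 2*R1" by linarith
    moreover have "norm x \<le> norm z + norm (x - z)" by (metis norm_triangle_sub)
    ultimately show "norm x \<le> RK + 2*R1" using RK[OF zK] by linarith
  qed
  have g_cont: "\<And>n. continuous_on UNIV (g n)"
    unfolding g_def \<psi>n_def
    by (intro continuous_on_sum continuous_on_mult continuous_on_const dil_cont cont\<psi> one_idx)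
  have term_nonneg: "\<And>n x Q. x \<in> K \<Longrightarrow> Q \<in> \<Theta>' n \<Longrightarrow> c n * a * \<psi>n n Q x \<ge> 0"
  proof -
    fix n x Q assume xK: "x \<in> K" and Q: "Q \<in> \<Theta>' n"
    have Qin: "Q \<in> \<Theta> n" using Q sub\<Theta>' by blast
    note H = cond[where x=x and n=n and Q=Q, OF inKn[OF xK] Qin]
    have "a * \<psi>n n Q x \<ge> 0"
      using H by (cases "x \<in> closed_cube (t + N*n) Q") (auto simp: \<psi>n_def)
    then show "c n * a * \<psi>n n Q x \<ge> 0" using c0[of n] by (simp add: mult.assoc)
  qed
  have g_nonneg: "\<And>n x. x \<in> K \<Longrightarrow> g n x \<ge> 0"
    unfolding g_def by (intro sum_nonneg term_nonneg)
  have g_lower: "\<And>n x. x \<in> G \<Longrightarrow> g n x \<ge> c n"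
  proof -
    fix n x assume xG: "x \<in> G"
    then have xK: "x \<in> K" using G(1) by blast
    then obtain Q where Q: "Q \<in> \<Theta> n" "x \<in> closed_cube (t + N*n) Q"
      using inKn[OF xK, of n] unfolding Kn_def by blast
    then have Q': "Q \<in> \<Theta>' n" using xG by (auto simp: \<Theta>'_def)
    have "a * \<psi>n n Q x \<ge> 1" using cond[where x=x and n=n and Q=Q, OF inKn[OF xK] Q(1)] Q(2) by (simp add: \<psi>n_def)
    then have "c n * 1 \<le> c n * (a * \<psi>n n Q x)" using c0[of n] by (intro mult_left_mono) auto
    also have "\<dots> \<le> g n x" unfolding g_def
      using member_le_sum[of Q "\<Theta>' n" "\<lambda>Q. c n * a * \<psi>n n Q x"] Q' fin\<Theta>' term_nonneg[OF xK]
      by (simp add: mult.assoc)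
    finally show "g n x \<ge> c n" by simp
  qed
  have g_summ: "\<And>x. summable (\<lambda>n. g n x)"
    by (rule summable_comparison_test'[where N=0, OF summable_mult2[OF summ_c, of Bg]]) (use g_bound in simp)
  define Cg where "Cg = suminf c * Bg"
  define f1 where "f1 x = (\<Sum>n. g n x)" for x
  have psum_bound: "\<And>m x. \<bar>\<Sum>n<m. g n x\<bar> \<le> Cg"
  proof -
    fix m x
    have "\<bar>\<Sum>n<m. g n x\<bar> \<le> (\<Sum>n<m. \<bar>g n x\<bar>)" by (rule sum_abs)
    also have "\<dots> \<le> (\<Sum>n<m. c n * Bg)" by (rule sum_mono) (rule g_bound)
    also have "\<dots> \<le> (\<Sum>n. c n * Bg)"
      by (rule sum_le_suminf[OF summable_mult2[OF summ_c]]) (auto intro!: mult_nonneg_nonneg less_imp_le[OF c0] Bg0)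
    also have "\<dots> = Cg" unfolding Cg_def by (rule suminf_mult2[OF summ_c, symmetric])
    finally show "\<bar>\<Sum>n<m. g n x\<bar> \<le> Cg" .
  qed
  have f1_lim: "\<And>x. (\<lambda>m. \<Sum>n<m. g n x) \<longlonglongrightarrow> f1 x"
    unfolding f1_def by (rule summable_LIMSEQ[OF g_summ])
  have f1_bound: "\<And>x. \<bar>f1 x\<bar> \<le> Cg"
  proof -
    fix x
    show "\<bar>f1 x\<bar> \<le> Cg"
      by (rule LIMSEQ_le_const2[OF tendsto_rabs[OF f1_lim]]) (use psum_bound in blast)
  qed
  have f1_supp: "\<And>x. f1 x \<noteq> 0 \<Longrightarrow> norm x \<le> RK + 2*R1"
  proof (rule ccontr)
    fix x assume "f1 x \<noteq> 0" "\<not> norm x \<le> RK + 2*R1"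
    then have "\<And>n. g n x = 0" using g_supp by force
    then show False using \<open>f1 x \<noteq> 0\<close> by (simp add: f1_def)
  qed
  have psum_meas: "\<And>m. (\<lambda>x. \<Sum>n<m. g n x) \<in> borel_measurable lebesgue"
    by (intro cont_meas continuous_on_sum g_cont)
  have f1_meas: "f1 \<in> borel_measurable lebesgue"
    by (rule borel_measurable_LIMSEQ_metric[OF psum_meas f1_lim])
  define W where "W (i::nat) (j::nat) k = (if i = 1 \<and> N dvd j \<and> k \<in> \<mu> (j div N) ` \<Theta>' (j div N) then c (j div N) * a else 0)"
    for i j k
  have wc1: "\<And>i j k. i \<in> wav_idx TYPE('n) \<Longrightarrow> wcoef \<psi> f1 i j k = W i j k"
  proof -
    fix i j k assume i: "i \<in> wav_idx TYPE('n)"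
    define h where "h = dil (\<psi> i) (int j) k"
    obtain Ri where Ri: "\<And>x. norm x > Ri \<Longrightarrow> \<psi> i x = 0"
      using supp(2) i unfolding compactly_supported_def by blast
    obtain Mi where Mi: "\<And>y. \<bar>\<psi> i y\<bar> \<le> Mi"
      using cont_supp_bdd[OF cont\<psi>[OF i] Ri] by blast
    have h_cont: "continuous_on UNIV h" unfolding h_def by (rule dil_cont[OF cont\<psi>[OF i]])
    have h_bd: "\<And>x. \<bar>h x\<bar> \<le> Mi" by (simp add: h_def dil_def Mi)
    have h_supp: "\<And>x. h x \<noteq> 0 \<Longrightarrow> norm x \<le> Ri + norm (vec_of_int k)"
      unfolding h_def by (rule dil_supp2[where g="\<psi> i", OF Ri])
    define e where "e = (2::real) powr (- real CARD('n) * real j)"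
    define sm where "sm m x = h x * (\<Sum>n<m. g n x)" for m x
    have lim1: "(\<lambda>m. integral\<^sup>L lebesgue (sm m)) \<longlonglongrightarrow> (\<integral>x. h x * f1 x \<partial>lebesgue)"
    proof (rule integral_dominated_convergence[where w="\<lambda>x. \<bar>h x\<bar> * Cg"])
      show "(\<lambda>x. h x * f1 x) \<in> borel_measurable lebesgue"
        using cont_meas[OF h_cont] f1_meas by measurable
      show "\<And>m. sm m \<in> borel_measurable lebesgue"
        unfolding sm_def using cont_meas[OF h_cont] psum_meas by measurable
      show "integrable lebesgue (\<lambda>x. \<bar>h x\<bar> * Cg)"
      proof (rule integrable_bdd_supp)
        show "(\<lambda>x. \<bar>h x\<bar> * Cg) \<in> borel_measurable lebesgue" using cont_meas[OF h_cont] by measurable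
        show "\<bar>\<bar>h x\<bar> * Cg\<bar> \<le> \<bar>Mi * Cg\<bar>" for x
          using h_bd[of x] by (simp add: abs_mult mult_right_mono)
        show "\<bar>h x\<bar> * Cg \<noteq> 0 \<Longrightarrow> norm x \<le> Ri + norm (vec_of_int k)" for x using h_supp by force
      qed
      show "AE x in lebesgue. (\<lambda>m. sm m x) \<longlonglongrightarrow> h x * f1 x"
        unfolding sm_def by (intro AE_I2 tendsto_mult_left f1_lim)
      show "\<And>m. AE x in lebesgue. norm (sm m x) \<le> \<bar>h x\<bar> * Cg"
        unfolding sm_def using psum_bound by (intro AE_I2) (simp add: abs_mult mult_left_mono)
    qed
    have int_prod: "\<And>n Q. integrable lebesgue (\<lambda>x. h x * \<psi>n n Q x)"
    proof -
      fix n Q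
      show "integrable lebesgue (\<lambda>x. h x * \<psi>n n Q x)"
      proof (rule integrable_bdd_supp)
        show "(\<lambda>x. h x * \<psi>n n Q x) \<in> borel_measurable lebesgue"
          unfolding \<psi>n_def using cont_meas[OF h_cont] cont_meas[OF dil_cont[OF cont\<psi>[OF one_idx]]]
          by measurable
        show "\<bar>h x * \<psi>n n Q x\<bar> \<le> Mi * M\<psi>" for x
          unfolding abs_mult using h_bd[of x] M\<psi>[of "(2 powr real_of_int (int (N * n))) *\<^sub>R x - vec_of_int (\<mu> n Q)"]
          by (intro mult_mono) (auto simp: \<psi>n_def dil_def)
        show "h x * \<psi>n n Q x \<noteq> 0 \<Longrightarrow> norm x \<le> Ri + norm (vec_of_int k)" for x using h_supp by force
      qed
    qed
    have inner: "(\<Sum>Q\<in>\<Theta>' n. c n * a * (\<integral>x. h x * \<psi>n n Q x \<partial>lebesgue))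
        = (if n = j div N then W i j k * e else 0)" for n
    proof -
      have "(\<Sum>Q\<in>\<Theta>' n. c n * a * (\<integral>x. h x * \<psi>n n Q x \<partial>lebesgue))
          = (\<Sum>Q\<in>\<Theta>' n. c n * a * (if i = 1 \<and> j = N*n \<and> k = \<mu> n Q then e else 0))"
      proof (rule sum.cong[OF refl])
        fix Q assume "Q \<in> \<Theta>' n"
        have "(\<integral>x. h x * \<psi>n n Q x \<partial>lebesgue) = (if i = 1 \<and> j = N*n \<and> k = \<mu> n Q then e else 0)"
          unfolding h_def \<psi>n_def e_def by (rule wav_orth[OF wav i one_idx])
        then show "c n * a * (\<integral>x. h x * \<psi>n n Q x \<partial>lebesgue) = c n * a * (if i = 1 \<and> j = N*n \<and> k = \<mu> n Q then e else 0)"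
          by simp
      qed
      also have "\<dots> = (if i = 1 \<and> j = N*n \<and> k \<in> \<mu> n ` \<Theta>' n then c n * a * e else 0)"
      proof (cases "i = 1 \<and> j = N*n")
        case True
        then have "(\<Sum>Q\<in>\<Theta>' n. c n * a * (if i = 1 \<and> j = N*n \<and> k = \<mu> n Q then e else 0))
            = (\<Sum>Q\<in>\<Theta>' n. if k = \<mu> n Q then c n * a * e else 0)"
          by (intro sum.cong) auto
        also have "\<dots> = (if k \<in> \<mu> n ` \<Theta>' n then c n * a * e else 0)"
          by (rule sum_inj_delta[OF inj\<mu>' fin\<Theta>'])
        finally show ?thesis using True by simp
      qed auto
      also have "\<dots> = (if n = j div N then W i j k * e else 0)"
        using Nge by (auto simp: W_def)
      finally show ?thesis .
    qed
    have int_sm: "integral\<^sup>L lebesgue (sm m) = (if j div N < m then W i j k * e else 0)" for m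
    proof -
      have "sm m = (\<lambda>x. \<Sum>n<m. \<Sum>Q\<in>\<Theta>' n. c n * a * (h x * \<psi>n n Q x))"
        unfolding sm_def g_def by (auto simp: sum_distrib_left mult_ac)
      then have "integral\<^sup>L lebesgue (sm m) = (\<Sum>n<m. \<Sum>Q\<in>\<Theta>' n. c n * a * (\<integral>x. h x * \<psi>n n Q x \<partial>lebesgue))"
        using int_prod by (simp add: integral_sum integrable_sum)
      also have "\<dots> = (\<Sum>n<m. if n = j div N then W i j k * e else 0)"
        using inner by simp
      also have "\<dots> = (if j div N < m then W i j k * e else 0)"
        by (simp add: sum.delta')
      finally show ?thesis .
    qed
    have "(\<lambda>m. integral\<^sup>L lebesgue (sm (m + Suc j))) \<longlonglongrightarrow> (\<integral>x. h x * f1 x \<partial>lebesgue)"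
      by (rule LIMSEQ_ignore_initial_segment[OF lim1])
    moreover have "(\<lambda>m. integral\<^sup>L lebesgue (sm (m + Suc j))) = (\<lambda>m. W i j k * e)"
    proof
      fix m
      have "j div N \<le> j" by (rule div_le_dividend)
      then have "j div N < m + Suc j" by linarith
      then show "integral\<^sup>L lebesgue (sm (m + Suc j)) = W i j k * e" by (simp only: int_sm if_True)
    qed
    ultimately have "(\<lambda>m. W i j k * e) \<longlonglongrightarrow> (\<integral>x. h x * f1 x \<partial>lebesgue)" by simp
    then have hf: "(\<integral>x. h x * f1 x \<partial>lebesgue) = W i j k * e" by (simp add: LIMSEQ_const_iff)
    have ee: "2 powr (real CARD('n) * real j) * e = 1"
      unfolding e_def by (simp add: powr_add[symmetric])
    have "wcoef \<psi> f1 i j k = 2 powr (real CARD('n) * real j) * (W i j k * e)"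
      unfolding wcoef_def using hf by (simp add: h_def)
    also have "\<dots> = W i j k * (2 powr (real CARD('n) * real j) * e)" by (simp only: ac_simps)
    finally show "wcoef \<psi> f1 i j k = W i j k" using ee by simp
  qed
  obtain R\<phi> where R\<phi>: "\<And>x. norm x > R\<phi> \<Longrightarrow> \<phi> x = 0"
    using supp(1) unfolding compactly_supported_def by blast
  define r\<phi> where "r\<phi> = \<bar>RK\<bar> + 2*R1 + \<bar>R\<phi>\<bar>"
  define K\<phi> where "K\<phi> = {k::int^'n. \<forall>m. \<bar>(\<lambda>m. 0::real) m - real_of_int (k$m)\<bar> \<le> r\<phi>}"
  have finK\<phi>: "finite K\<phi>" unfolding K\<phi>_def by (rule box_count(1)) (use R1(1) in \<open>simp add: r\<phi>_def\<close>)
  have sc0: "\<And>k. k \<notin> K\<phi> \<Longrightarrow> scoef \<phi> f1 k = 0"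
  proof -
    fix k assume k: "k \<notin> K\<phi>"
    then obtain m where m: "\<bar>real_of_int (k$m)\<bar> > r\<phi>" by (auto simp: K\<phi>_def not_le)
    have "\<phi> (x - vec_of_int k) * f1 x = 0" for x
    proof (rule ccontr)
      assume "\<phi> (x - vec_of_int k) * f1 x \<noteq> 0"
      then have n1: "norm x \<le> RK + 2*R1" and n2: "norm (x - vec_of_int k) \<le> R\<phi>"
        using f1_supp R\<phi> by force+
      have "\<bar>x$m\<bar> \<le> norm x" by (rule component_le_norm_cart)
      moreover have "\<bar>(x - vec_of_int k)$m\<bar> \<le> norm (x - vec_of_int k)" by (rule component_le_norm_cart)
      ultimately have "\<bar>real_of_int (k$m)\<bar> \<le> RK + 2*R1 + R\<phi>" using n1 n2 by auto
      then show False using m by (auto simp: r\<phi>_def)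
    qed
    then have "(\<lambda>x. \<phi> (x - vec_of_int k) * f1 x) = (\<lambda>x. 0)" by (rule ext)
    then show "scoef \<phi> f1 k = 0" unfolding scoef_def by (simp only:) simp
  qed
  define A1 where "A1 = (\<Sum>k\<in>K\<phi>. \<bar>scoef \<phi> f1 k\<bar> powr p)"
  have A1: "A1 \<ge> 0" unfolding A1_def by (intro sum_nonneg) simp
  define A where "A = \<bar>a\<bar> * C powr (1/p)"
  have A0: "A \<ge> 0" by (simp add: A_def)
  define \<rho> where "\<rho> = 2 powr ((s - d/p + \<alpha>1/p - \<gamma>) * real N)"
  have \<rho>: "0 < \<rho>" "\<rho> < 1"
  proof -
    have "s - d/p + \<alpha>1/p - \<gamma> = L1 - \<gamma>" using p0 by (simp add: L1_def field_simps)
    then have "(s - d/p + \<alpha>1/p - \<gamma>) * real N < 0" using \<gamma>1 Nge by (simp add: mult_neg_pos)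
    then have "\<rho> < 2 powr 0" unfolding \<rho>_def by (intro powr_less_mono) auto
    then show "\<rho> < 1" by simp
  qed (simp add: \<rho>_def)
  define \<epsilon> where "\<epsilon> = 1 / (1 + A1 powr (1/p) + A / (1 - \<rho>))"
  have \<epsilon>0: "\<epsilon> > 0" using A0 \<rho> by (simp add: \<epsilon>_def add_pos_nonneg)
  define f where "f x = \<epsilon> * f1 x" for x
  have wcf: "\<And>i j k. i \<in> wav_idx TYPE('n) \<Longrightarrow> wcoef \<psi> f i j k = \<epsilon> * W i j k"
    unfolding f_def using wc1 by (simp add: wcoef_def mult_ac integral_mult_right_zero)
  have scf: "\<And>k. scoef \<phi> f k = \<epsilon> * scoef \<phi> f1 k"
    unfolding f_def by (simp add: scoef_def mult_ac integral_mult_right_zero)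
  have Qf: "\<And>l x. Qop \<psi> f l x = (if N dvd l then \<epsilon> * g (l div N) x else 0)"
  proof -
    fix l x
    define X where "X = (if N dvd l then \<epsilon> * g (l div N) x else 0)"
    have each: "infsum (\<lambda>k. wcoef \<psi> f i l k * dil (\<psi> i) (int l) k x) UNIV = (if i = 1 then X else 0)"
      if i: "i \<in> wav_idx TYPE('n)" for i
    proof -
      have "infsum (\<lambda>k. wcoef \<psi> f i l k * dil (\<psi> i) (int l) k x) UNIV
          = infsum (\<lambda>k. \<epsilon> * W i l k * dil (\<psi> i) (int l) k x) UNIV"
        using wcf[OF i] by simp
      also have "\<dots> = (if i = 1 then X else 0)"
      proof (cases "i = 1 \<and> N dvd l")
        case True
        define n where "n = l div N"
        have ln: "l = N * n" using True by (simp add: n_def)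
        have "infsum (\<lambda>k. \<epsilon> * W i l k * dil (\<psi> i) (int l) k x) UNIV
            = (\<Sum>k\<in>\<mu> n ` \<Theta>' n. \<epsilon> * W i l k * dil (\<psi> i) (int l) k x)"
          by (rule infsum_supp) (use fin\<Theta>' in \<open>auto simp: W_def n_def\<close>)
        also have "\<dots> = (\<Sum>Q\<in>\<Theta>' n. \<epsilon> * W i l (\<mu> n Q) * dil (\<psi> i) (int l) (\<mu> n Q) x)"
          by (simp add: sum.reindex[OF inj\<mu>'])
        also have "\<dots> = (\<Sum>Q\<in>\<Theta>' n. \<epsilon> * (c n * a * \<psi>n n Q x))"
      proof (rule sum.cong[OF refl])
        fix Q assume Q: "Q \<in> \<Theta>' n"
        have "W i l (\<mu> n Q) = c n * a" using True Q by (auto simp: W_def n_def)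
        moreover have "dil (\<psi> i) (int l) (\<mu> n Q) x = \<psi>n n Q x" using True by (simp add: \<psi>n_def ln)
        ultimately show "\<epsilon> * W i l (\<mu> n Q) * dil (\<psi> i) (int l) (\<mu> n Q) x = \<epsilon> * (c n * a * \<psi>n n Q x)"
          by simp
      qed
        also have "\<dots> = \<epsilon> * g n x" by (simp add: g_def sum_distrib_left)
        finally show ?thesis using True by (simp add: X_def n_def)
      next
        case False
        then have "\<And>k. W i l k = 0" by (auto simp: W_def)
        then show ?thesis using False by (auto simp: X_def)
      qed
      finally show ?thesis .
    qed
    have "Qop \<psi> f l x = (\<Sum>i\<in>wav_idx TYPE('n). if i = 1 then X else 0)"
      unfolding Qop_def using each by (intro sum.cong) auto
    also have "\<dots> = X" using one_idx by (simp add: wav_idx_def)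
    finally show "Qop \<psi> f l x = (if N dvd l then \<epsilon> * g (l div N) x else 0)" by (simp add: X_def)
  qed
  have Qsums: "\<And>x. (\<lambda>l. Qop \<psi> f l x) sums (\<epsilon> * f1 x)"
  proof -
    fix x
    have sm: "strict_mono (\<lambda>n. N * n)" using Nge by (auto simp: strict_mono_def)
    have "(\<lambda>n. Qop \<psi> f (N * n) x) = (\<lambda>n. \<epsilon> * g n x)" using Nge by (auto simp: Qf)
    moreover have "(\<lambda>n. \<epsilon> * g n x) sums (\<epsilon> * f1 x)"
      unfolding f1_def by (rule sums_mult[OF summable_sums[OF g_summ]])
    ultimately have "(\<lambda>n. Qop \<psi> f (N * n) x) sums (\<epsilon> * f1 x)" by simp
    moreover have Z: "\<And>l. l \<notin> range (\<lambda>n. N * n) \<Longrightarrow> Qop \<psi> f l x = 0"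
    proof -
      fix l assume "l \<notin> range (\<lambda>n. N * n)"
      then have "\<not> N dvd l" by (auto elim!: dvdE)
      then show "Qop \<psi> f l x = 0" by (simp add: Qf)
    qed
    ultimately show "(\<lambda>l. Qop \<psi> f l x) sums (\<epsilon> * f1 x)"
      using sums_mono_reindex[where f="\<lambda>l. Qop \<psi> f l x", OF sm Z] by simp
  qed
  have conv: "\<And>x. convergent (\<lambda>j. Pop \<phi> \<psi> f j x)"
  proof -
    fix x
    have "(\<lambda>j. \<Sum>l<j. Qop \<psi> f l x) \<longlonglongrightarrow> \<epsilon> * f1 x" using Qsums[of x] by (simp add: sums_def)
    then have "(\<lambda>j. Pop \<phi> \<psi> f j x) \<longlonglongrightarrow> (\<Sum>\<^sub>\<infinity>k. scoef \<phi> f k * \<phi> (x - vec_of_int k)) + \<epsilon> * f1 x"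
      unfolding Pop_def by (intro tendsto_add tendsto_const)
    then show "convergent (\<lambda>j. Pop \<phi> \<psi> f j x)" by (auto simp: convergent_def)
  qed
  have Rsumm: "\<And>x j. summable (\<lambda>l. Qop \<psi> f (l + j) x)"
    using Qsums by (intro summable_ignore_initial_segment) (meson sums_summable)
  have Qnonneg: "\<And>x l. x \<in> K \<Longrightarrow> Qop \<psi> f l x \<ge> 0"
    using g_nonneg \<epsilon>0 by (simp add: Qf)
  have Rnonneg: "\<And>x j. x \<in> K \<Longrightarrow> Rop \<psi> f j x \<ge> 0"
    unfolding Rop_def using Rsumm Qnonneg by (intro suminf_nonneg) auto
  have Rlow: "\<And>x j. x \<in> G \<Longrightarrow> Rop \<psi> f j x \<ge> \<epsilon> * c (j div N + 1)"
  proof -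
    fix x j assume xG: "x \<in> G"
    then have xK: "x \<in> K" using G(1) by blast
    define n where "n = j div N + 1"
    have "N * (j div N) \<le> j" by (simp add: times_div_less_eq_dividend)
    moreover have "j < N * (j div N) + N"
    proof -
      have "j mod N < N" using Nge by simp
      moreover have "N * (j div N) + j mod N = j" by (rule mult_div_mod_eq)
      ultimately show ?thesis by linarith
    qed
    ultimately have nj: "j \<le> N * n" by (simp add: n_def)
    define l0 where "l0 = N * n - j"
    have "Qop \<psi> f (l0 + j) x = \<epsilon> * g n x" using nj Nge by (simp add: l0_def Qf)
    also have "\<dots> \<ge> \<epsilon> * c n" using g_lower[OF xG] \<epsilon>0 by simp
    finally have "\<epsilon> * c n \<le> (\<Sum>l\<in>{l0}. Qop \<psi> f (l + j) x)" by simp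
    also have "\<dots> \<le> Rop \<psi> f j x"
      unfolding Rop_def by (rule sum_le_suminf[OF Rsumm]) (use Qnonneg[OF xK] in auto)
    finally show "Rop \<psi> f j x \<ge> \<epsilon> * c (j div N + 1)" by (simp add: n_def)
  qed
  have liminf_part: "\<And>x. x \<in> G \<Longrightarrow> liminf (\<lambda>j. if Rop \<psi> f j x = 0 then -\<infinity>
               else ereal (ln \<bar>Rop \<psi> f j x\<bar> / (real j * ln 2)))
           \<ge> ereal ((real CARD('n) - s * p - \<alpha>) / p)"
  proof -
    fix x assume xG: "x \<in> G"
    define D where "D = ln \<epsilon> - \<gamma> * real N * ln 2"
    define Lb where "Lb j = -\<gamma> + (D / ln 2) * inverse (real j)" for j :: nat
    have Llim: "Lb \<longlonglongrightarrow> -\<gamma>"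
    proof -
      have "(\<lambda>j. -\<gamma> + (D / ln 2) * inverse (real j)) \<longlonglongrightarrow> -\<gamma> + (D / ln 2) * 0"
        by (intro tendsto_add tendsto_const tendsto_mult lim_inverse_n)
      then show ?thesis by (simp add: Lb_def[abs_def])
    qed
    have "-U < -\<gamma>" using \<gamma>2 by simp
    then have ev1: "eventually (\<lambda>j. Lb j > -U) sequentially" by (rule order_tendstoD(1)[OF Llim])
    have Rpos: "Rop \<psi> f j x > 0" for j
      using Rlow[OF xG, of j] c0[of "j div N + 1"] \<epsilon>0 by (meson less_le_trans mult_pos_pos)
    have bnd: "ln (Rop \<psi> f j x) / (real j * ln 2) \<ge> Lb j" if j1: "j \<ge> 1" for j
    proof -
      define n where "n = j div N + 1"
      have "N * (j div N) \<le> j" by (simp add: times_div_less_eq_dividend)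
      then have "real (N * (j div N)) \<le> real j" by (simp only: of_nat_le_iff)
      then have Nn: "real (N*n) \<le> real j + real N" by (simp add: n_def algebra_simps)
      have "ln (\<epsilon> * c n) \<le> ln (Rop \<psi> f j x)"
        using Rlow[OF xG, of j] c0[of n] \<epsilon>0 unfolding n_def by (intro ln_mono) auto
      moreover have "ln (\<epsilon> * c n) = ln \<epsilon> - \<gamma> * real (N*n) * ln 2"
        using \<epsilon>0 c0[of n] by (simp add: ln_mult c_eq ln_powr)
      moreover have "\<gamma> * real (N*n) * ln 2 \<le> \<gamma> * (real j + real N) * ln 2"
        using Nn \<gamma>0 by (intro mult_right_mono mult_left_mono) auto
      ultimately have "D - \<gamma> * real j * ln 2 \<le> ln (Rop \<psi> f j x)"
        by (simp add: D_def algebra_simps)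
      then have "(D - \<gamma> * real j * ln 2) / (real j * ln 2) \<le> ln (Rop \<psi> f j x) / (real j * ln 2)"
        using j1 by (intro divide_right_mono) auto
      moreover have "(D - \<gamma> * real j * ln 2) / (real j * ln 2) = Lb j"
        using j1 by (simp add: Lb_def field_simps)
      ultimately show ?thesis by simp
    qed
    have "eventually (\<lambda>j. ereal (-U) \<le> (if Rop \<psi> f j x = 0 then -\<infinity>
               else ereal (ln \<bar>Rop \<psi> f j x\<bar> / (real j * ln 2)))) sequentially"
      using ev1 eventually_ge_at_top[of "1::nat"]
    proof eventually_elim
      case (elim j)
      then have "-U \<le> ln (Rop \<psi> f j x) / (real j * ln 2)" using bnd[of j] by linarith
      then show ?case using Rpos[of j] by simp
    qed
    then have "ereal (-U) \<le> liminf (\<lambda>j. if Rop \<psi> f j x = 0 then -\<infinity>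
               else ereal (ln \<bar>Rop \<psi> f j x\<bar> / (real j * ln 2)))"
      by (rule Liminf_bounded)
    moreover have "-U = (real CARD('n) - s * p - \<alpha>) / p" unfolding U_def d_def by (metis minus_divide_left minus_diff_eq diff_diff_eq add_diff_eq)
    ultimately show "liminf (\<lambda>j. if Rop \<psi> f j x = 0 then -\<infinity>
               else ereal (ln \<bar>Rop \<psi> f j x\<bar> / (real j * ln 2)))
           \<ge> ereal ((real CARD('n) - s * p - \<alpha>) / p)" by simp
  qed
  have f_meas: "f \<in> borel_measurable lebesgue" unfolding f_def using f1_meas by measurable
  have Lp: "Lp_fun p f"
    unfolding Lp_fun_def
  proof (intro conjI f_meas integrable_bdd_supp)
    show "(\<lambda>x. \<bar>f x\<bar> powr p) \<in> borel_measurable lebesgue" using f_meas by measurable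
    show "\<bar>\<bar>f x\<bar> powr p\<bar> \<le> (\<epsilon> * Cg) powr p" for x
    proof -
      have "\<bar>f x\<bar> \<le> \<epsilon> * Cg" using f1_bound[of x] \<epsilon>0 by (simp add: f_def abs_mult)
      then show ?thesis using p0 by (simp add: powr_mono2)
    qed
    show "\<bar>f x\<bar> powr p \<noteq> 0 \<Longrightarrow> norm x \<le> RK + 2*R1" for x
      using f1_supp by (auto simp: f_def)
  qed
  have sc_summ: "(\<lambda>k. \<bar>scoef \<phi> f k\<bar> powr p) summable_on UNIV"
    by (rule summable_supp[OF finK\<phi>]) (simp add: scf sc0)
  have sc_sum: "(\<Sum>\<^sub>\<infinity>k. \<bar>scoef \<phi> f k\<bar> powr p) = \<epsilon> powr p * A1"
  proof -
    have "(\<Sum>\<^sub>\<infinity>k. \<bar>scoef \<phi> f k\<bar> powr p) = (\<Sum>k\<in>K\<phi>. \<bar>scoef \<phi> f k\<bar> powr p)"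
      by (rule infsum_supp[OF finK\<phi>]) (simp add: scf sc0)
    also have "\<dots> = (\<Sum>k\<in>K\<phi>. \<epsilon> powr p * \<bar>scoef \<phi> f1 k\<bar> powr p)"
      using \<epsilon>0 by (simp add: scf abs_mult powr_mult)
    finally show ?thesis by (simp add: A1_def sum_distrib_left)
  qed
  have sc_part: "(\<Sum>\<^sub>\<infinity>k. \<bar>scoef \<phi> f k\<bar> powr p) powr (1/p) = \<epsilon> * A1 powr (1/p)"
    unfolding sc_sum using \<epsilon>0 A1 p0 by (simp add: powr_mult powr_powr)
  have wc_summ: "\<And>i j. i \<in> wav_idx TYPE('n) \<Longrightarrow> (\<lambda>k. \<bar>wcoef \<psi> f i j k\<bar> powr p) summable_on UNIV"
  proof -
    fix i j assume i: "i \<in> wav_idx TYPE('n)"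
    show "(\<lambda>k. \<bar>wcoef \<psi> f i j k\<bar> powr p) summable_on UNIV"
      by (rule summable_supp[OF finite_imageI[OF fin\<Theta>'[of "j div N"], of "\<mu> (j div N)"]])
         (simp add: wcf[OF i] W_def)
  qed
  define E where "E n = 2 powr ((s - d/p) * real (N*n)) * (real (card (\<Theta>' n)) * (\<epsilon> * c n * \<bar>a\<bar>) powr p) powr (1/p)" for n
  have eps_eq: "\<And>j. besov_eps \<psi> s p f j = (if N dvd j then E (j div N) else 0)"
  proof -
    fix j
    define n where "n = j div N"
    define X where "X = real (card (\<Theta>' n)) * (\<epsilon> * c n * \<bar>a\<bar>) powr p"
    have each: "(\<Sum>\<^sub>\<infinity>k. \<bar>wcoef \<psi> f i j k\<bar> powr p) = (if i = 1 \<and> N dvd j then X else 0)"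
      if i: "i \<in> wav_idx TYPE('n)" for i
    proof (cases "i = 1 \<and> N dvd j")
      case True
      have "(\<Sum>\<^sub>\<infinity>k. \<bar>wcoef \<psi> f i j k\<bar> powr p) = (\<Sum>k\<in>\<mu> n ` \<Theta>' n. \<bar>wcoef \<psi> f i j k\<bar> powr p)"
        by (rule infsum_supp) (use fin\<Theta>' in \<open>auto simp: wcf[OF i] W_def n_def\<close>)
      also have "\<dots> = (\<Sum>k\<in>\<mu> n ` \<Theta>' n. (\<epsilon> * c n * \<bar>a\<bar>) powr p)"
      proof (rule sum.cong[OF refl])
        fix k assume "k \<in> \<mu> n ` \<Theta>' n"
        then have "W i j k = c n * a" using True by (simp add: W_def n_def)
        then show "\<bar>wcoef \<psi> f i j k\<bar> powr p = (\<epsilon> * c n * \<bar>a\<bar>) powr p"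
          using \<epsilon>0 c0[of n] by (simp add: wcf[OF i] abs_mult mult.assoc)
      qed
      also have "\<dots> = X" by (simp add: X_def card_image[OF inj\<mu>'])
      finally show ?thesis using True by simp
    next
      case False
      then have "\<And>k. W i j k = 0" by (auto simp: W_def)
      then show ?thesis using False by (auto simp: wcf[OF i])
    qed
    have "(\<Sum>i\<in>wav_idx TYPE('n). \<Sum>\<^sub>\<infinity>k. \<bar>wcoef \<psi> f i j k\<bar> powr p)
        = (\<Sum>i\<in>wav_idx TYPE('n). if i = 1 then (if N dvd j then X else 0) else 0)"
      using each by (intro sum.cong) auto
    also have "\<dots> = (if N dvd j then X else 0)" using one_idx by (simp add: wav_idx_def)
    finally have S: "(\<Sum>i\<in>wav_idx TYPE('n). \<Sum>\<^sub>\<infinity>k. \<bar>wcoef \<psi> f i j k\<bar> powr p) = (if N dvd j then X else 0)" .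
    show "besov_eps \<psi> s p f j = (if N dvd j then E (j div N) else 0)"
    proof (cases "N dvd j")
      case True
      then have jn: "j = N * n" by (simp add: n_def)
      show ?thesis using True unfolding besov_eps_def S E_def X_def d_def
        using Nge by (simp add: n_def[symmetric] jn)
    qed (simp add: besov_eps_def S)
  qed
  have E_bound: "\<And>n. E n \<le> \<epsilon> * A * \<rho> ^ n"
  proof -
    fix n
    define M where "M = real (N*n)"
    define y where "y = \<epsilon> * c n * \<bar>a\<bar>"
    have y0: "y \<ge> 0" using \<epsilon>0 c0[of n] by (simp add: y_def)
    have cardp: "real (card (\<Theta>' n)) powr (1/p) \<le> C powr (1/p) * 2 powr (\<alpha>1 * M / p)"
    proof -
      have "real (card (\<Theta>' n)) powr (1/p) \<le> (C * 2 powr (\<alpha>1 * M)) powr (1/p)"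
        using Cb[of n] p0 by (intro powr_mono2) (auto simp: M_def)
      also have "\<dots> = C powr (1/p) * 2 powr (\<alpha>1 * M / p)"
        using C0 by (simp add: powr_mult powr_powr)
      finally show ?thesis .
    qed
    have "E n = 2 powr ((s - d/p) * M) * (real (card (\<Theta>' n)) powr (1/p) * y)"
    proof -
      have "(real (card (\<Theta>' n)) * y powr p) powr (1/p) = real (card (\<Theta>' n)) powr (1/p) * (y powr p) powr (1/p)"
        using y0 by (simp add: powr_mult)
      also have "(y powr p) powr (1/p) = y"
        using y0 p0 by (simp add: powr_powr)
      finally show ?thesis by (simp add: E_def M_def y_def)
    qed
    also have "\<dots> \<le> 2 powr ((s - d/p) * M) * ((C powr (1/p) * 2 powr (\<alpha>1 * M / p)) * y)"
      using cardp y0 by (intro mult_left_mono mult_right_mono) auto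
    also have "\<dots> = \<epsilon> * A * (2 powr ((s - d/p) * M) * 2 powr (\<alpha>1 * M / p) * c n)"
      by (simp add: A_def y_def mult_ac)
    also have "2 powr ((s - d/p) * M) * 2 powr (\<alpha>1 * M / p) * c n = \<rho> ^ n"
    proof -
      have "2 powr ((s - d/p) * M) * 2 powr (\<alpha>1 * M / p) * c n
          = 2 powr ((s - d/p) * M + \<alpha>1 * M / p + (-\<gamma> * M))"
        unfolding c_eq M_def by (simp only: powr_add)
      also have "\<dots> = 2 powr ((s - d/p + \<alpha>1/p - \<gamma>) * real N * real n)"
        by (simp add: M_def algebra_simps)
      also have "\<dots> = \<rho> ^ n" by (simp add: \<rho>_def pow2_pow)
      finally show ?thesis .
    qed
    finally show "E n \<le> \<epsilon> * A * \<rho> ^ n" .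
  qed
  have E_nonneg: "\<And>n. E n \<ge> 0" by (simp add: E_def)
  have geo: "(\<lambda>n. \<epsilon> * A * \<rho> ^ n) sums (\<epsilon> * A * (1 / (1 - \<rho>)))"
    using \<rho> by (intro sums_mult geometric_sums) simp
  have E_summ: "summable E"
    by (rule summable_comparison_test'[where N=0, OF sums_summable[OF geo]]) (use E_bound E_nonneg in simp)
  have E_le: "suminf E \<le> \<epsilon> * A / (1 - \<rho>)"
  proof -
    have "suminf E \<le> (\<Sum>n. \<epsilon> * A * \<rho> ^ n)"
      by (rule suminf_le[OF E_bound E_summ sums_summable[OF geo]])
    also have "\<dots> = \<epsilon> * A / (1 - \<rho>)" using sums_unique[OF geo] by simp
    finally show ?thesis .
  qed
  have eps_sums: "(\<lambda>j. besov_eps \<psi> s p f j) sums (suminf E)"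
  proof -
    have sm: "strict_mono (\<lambda>n. N * n)" using Nge by (auto simp: strict_mono_def)
    have Z: "\<And>j. j \<notin> range (\<lambda>n. N * n) \<Longrightarrow> besov_eps \<psi> s p f j = 0"
    proof -
      fix j assume "j \<notin> range (\<lambda>n. N * n)"
      then have "\<not> N dvd j" by (auto elim!: dvdE)
      then show "besov_eps \<psi> s p f j = 0" by (simp add: eps_eq)
    qed
    have "(\<lambda>n. besov_eps \<psi> s p f (N * n)) = E" using Nge by (auto simp: eps_eq)
    then have "(\<lambda>n. besov_eps \<psi> s p f (N * n)) sums (suminf E)" using summable_sums[OF E_summ] by simp
    then show ?thesis using sums_mono_reindex[where f="\<lambda>j. besov_eps \<psi> s p f j", OF sm Z] by simp
  qed
  have eps_nonneg: "\<And>j. besov_eps \<psi> s p f j \<ge> 0" using E_nonneg by (simp add: eps_eq)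
  have eps1: "(\<lambda>j. besov_eps \<psi> s p f j powr 1) = (\<lambda>j. besov_eps \<psi> s p f j)"
    using eps_nonneg by (simp add: powr_one_gt_zero_iff)
  have bes: "besov \<phi> \<psi> s p 1 f"
    unfolding besov_def eps1 using Lp sc_summ wc_summ sums_summable[OF eps_sums] by blast
  have sumE0: "suminf E \<ge> 0" by (rule suminf_nonneg[OF E_summ E_nonneg])
  have "besov_norm \<phi> \<psi> s p 1 f = \<epsilon> * A1 powr (1/p) + suminf E"
    unfolding besov_norm_def eps1 sc_part sums_unique[OF eps_sums, symmetric] using sumE0 by simp
  also have "\<dots> \<le> \<epsilon> * A1 powr (1/p) + \<epsilon> * A / (1 - \<rho>)" using E_le by simp
  also have "\<dots> = \<epsilon> * (A1 powr (1/p) + A / (1 - \<rho>))" by (simp add: algebra_simps)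
  also have "\<dots> \<le> 1"
  proof -
    define Z where "Z = A1 powr (1/p) + A / (1 - \<rho>)"
    have Z0: "Z \<ge> 0" using A0 \<rho> by (simp add: Z_def)
    have "\<epsilon> * Z = Z / (1 + Z)" by (simp add: \<epsilon>_def Z_def)
    also have "\<dots> \<le> 1" using Z0 by simp
    finally show ?thesis by (simp add: Z_def)
  qed
  finally have nrm: "besov_norm \<phi> \<psi> s p 1 f \<le> 1" .
  show ?thesis
    using bes nrm conv Rnonneg liminf_part by blast
qed

end
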